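(* For all $\eta,d>0$ and all rationals $r$ with $0<r\le 1/2$ there is $\varepsilon=\varepsilon(\eta,d,r)>0$ such that for every $\tilde N_{max}\in\mathbb N$ there is $\beta=\beta(\eta,r,\varepsilon,\tilde N_{max})>0$ such that for all $n\in\mathbb N$ the following holds. Let $(F,R)$ be an anchored $\beta n$-forest with colour classes $F_1,F_2$ such that $R\subseteq F_2$ and every component $K$ of $F-R$ satisfies $|F_1\cap K|\le|F_2\cap K|$. Let $H$ be an $r$-skew LKS-graph on $n$ vertices with parameters $(k,\eta',\varepsilon,d)$ (with $k,\eta'$ arbitrary) whose cluster graph $\mathbf H$ has at most $\tilde N_{max}$ vertices. Let $U\subseteq V(H)$ and let $\mathbf M$ be a matching in $\mathbf H$ each of whose edges joins an $L$-cluster and an $S$-cluster. Suppose that a cluster $A\in V(\mathbf H)$ satisfies $$\overline{\deg}(A,\mathcal S\cap V(\mathbf M))\ge\frac{1-r}{r}|F_2|+\sum_{CD\in\mathbf M,\ C\in\mathcal S}\max\Big\{|U\cap C|,\frac{1-r}{r}|U\cap D|\Big\}+\eta n,$$ where $\mathcal S$ is the set of $S$-clusters and the sum runs over the edges $CD$ of $\mathbf M$ with $C$ the $S$-cluster and $D$ the $L$-cluster. Then every injective map of $R$ into the ultratypical vertices of $A$ extends to an embedding $\varphi$ of $F$ into $H$ avoiding $U$ (no vertex of $V(F)\setminus R$ is mapped into $U$) such that $\varphi(V(F_1))$ lies in the union of the $S$-clusters of $V(\mathbf M)$, $\varphi(V(F_2)\setminus R)$ lies in the union of the $L$-clusters of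 $V(\mathbf M)$, and the vertices of $V(F_2)$ are mapped to ultratypical vertices. Moreover, for every cluster $C\in V(\mathbf H)$ containing the image of some vertex of $F-R$, we have $|C\setminus(U\cup\varphi(V(F)))|\ge r\eta|C|/8$.
   Context: A pair $(F,R)$ is an anchored $\tau$-forest if $F$ is a forest, $R$ is contained in one colour class of $F$, every component of $F-R$ has at least $2$ and at most $\tau$ vertices, every component of $F-R$ is adjacent in $F$ to at least one and at most two vertices of $R$, and any two vertices of $R$ are at distance at least $4$ in $F$. An embedding is an injective map of vertices sending edges to edges. For disjoint $X,Y$, $d(X,Y)=|E(X,Y)|/(|X||Y|)$; $(X,Y)$ is $\varepsilon$-regular if $|d(X',Y')-d(X,Y)|\le\varepsilon$ whenever $X'\subseteq X$, $Y'\subseteq Y$, $|X'|\ge\varepsilon|X|$, $|Y'|\ge\varepsilon|Y|$. For $r\le1/2$, $H$ is an $r$-skew LKS-graph with parameters $(k,\eta',\varepsilon,d)$ if $V(H)$ has a partition $\{L_1,\dots,L_{m_L},S_1,\dots,S_{m_S}\}$ with: $m_L\ge(1+\eta')m_S$; all $L_i$ of equal size and all $S_j$ of equal size; $r|S_j|=(1-r)|L_i|$; each $(L_i,L_j)$ ($i\neq j$) and $(L_i,S_j)$ $\varepsilon$-regular of density $0$ or at least $d$; no edges inside the sets nor between distinct $S_i,S_j$; each $L_i$ has average degree at least $(1+\eta')k$. The $L_i$ ($S_j$) are $L$-clusters ($S$-clusters); the cluster graph $\mathbf H$ has the clusters as vertices, two adjacent iff the pair has positive density. For a cluster $A$ and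 a set $\mathcal T$ of clusters, $\overline{\deg}(A,\mathcal T)$ is the average over $a\in A$ of the number of neighbours of $a$ in the union of $\mathcal T$. A vertex $x$ of a cluster $X$ is typical to a cluster $Y$ if it has at least $(d(X,Y)-\varepsilon)|Y|$ neighbours in $Y$, and ultratypical if it is typical to all but at most $\sqrt{\varepsilon}|V(\mathbf H)|$ clusters $Y\neq X$. *)

theory Defs
  imports Complex_Main
begin

definition graph :: "'a set \<Rightarrow> ('a \<Rightarrow> 'a \<Rightarrow> bool) \<Rightarrow> bool" where
  "graph V E \<longleftrightarrow> finite V \<and> (\<forall>x y. E x y \<longrightarrow> x \<in> V \<and> y \<in> V)
     \<and> (\<forall>x y. E x y \<longrightarrow> E y x) \<and> (\<forall>x. \<not> E x x)"

definition is_cycle :: "('a \<Rightarrow> 'a \<Rightarrow> bool) \<Rightarrow> 'a list \<Rightarrow> bool" where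
  "is_cycle E xs \<longleftrightarrow> length xs \<ge> 3 \<and> distinct xs
     \<and> (\<forall>i. Suc i < length xs \<longrightarrow> E (xs ! i) (xs ! Suc i)) \<and> E (last xs) (hd xs)"

definition forest :: "'a set \<Rightarrow> ('a \<Rightarrow> 'a \<Rightarrow> bool) \<Rightarrow> bool" where
  "forest V E \<longleftrightarrow> graph V E \<and> \<not> (\<exists>xs. is_cycle E xs)"

definition colour_classes :: "'a set \<Rightarrow> ('a \<Rightarrow> 'a \<Rightarrow> bool) \<Rightarrow> 'a set \<Rightarrow> 'a set \<Rightarrow> bool" where
  "colour_classes V E X Y \<longleftrightarrow> X \<union> Y = V \<and> X \<inter> Y = {}
     \<and> (\<forall>x y. E x y \<longrightarrow> (x \<in> X \<and> y \<in> Y) \<or> (x \<in> Y \<and> y \<in> X))"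

definition walk :: "('a \<Rightarrow> 'a \<Rightarrow> bool) \<Rightarrow> 'a list \<Rightarrow> bool" where
  "walk E xs \<longleftrightarrow> xs \<noteq> [] \<and> (\<forall>i. Suc i < length xs \<longrightarrow> E (xs ! i) (xs ! Suc i))"

definition dist_at_least :: "('a \<Rightarrow> 'a \<Rightarrow> bool) \<Rightarrow> nat \<Rightarrow> 'a \<Rightarrow> 'a \<Rightarrow> bool" where
  "dist_at_least E m x y \<longleftrightarrow>
     (\<forall>xs. walk E xs \<and> hd xs = x \<and> last xs = y \<longrightarrow> length xs - 1 \<ge> m)"

definition components :: "('a \<Rightarrow> 'a \<Rightarrow> bool) \<Rightarrow> 'a set \<Rightarrow> 'a set set" where
  "components E W = {K. \<exists>x\<in>W. K = {y \<in> W. (\<lambda>u v. u \<in> W \<and> v \<in> W \<and> E u v)\<^sup>*\<^sup>* x y}}"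

definition anchored_forest ::
  "'a set \<Rightarrow> ('a \<Rightarrow> 'a \<Rightarrow> bool) \<Rightarrow> 'a set \<Rightarrow> real \<Rightarrow> bool" where
  "anchored_forest V E R \<tau> \<longleftrightarrow> forest V E \<and> R \<subseteq> V
     \<and> (\<exists>X Y. colour_classes V E X Y \<and> R \<subseteq> X)
     \<and> (\<forall>K \<in> components E (V - R).
           2 \<le> card K \<and> real (card K) \<le> \<tau>
           \<and> 1 \<le> card {x \<in> R. \<exists>y\<in>K. E x y} \<and> card {x \<in> R. \<exists>y\<in>K. E x y} \<le> 2)
     \<and> (\<forall>x\<in>R. \<forall>y\<in>R. x \<noteq> y \<longrightarrow> dist_at_least E 4 x y)"

definition edges_between :: "('a \<Rightarrow> 'a \<Rightarrow> bool) \<Rightarrow> 'a set \<Rightarrow> 'a set \<Rightarrow> ('a \<times> 'a) set" where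
  "edges_between E X Y = {(x, y). x \<in> X \<and> y \<in> Y \<and> E x y}"

definition density :: "('a \<Rightarrow> 'a \<Rightarrow> bool) \<Rightarrow> 'a set \<Rightarrow> 'a set \<Rightarrow> real" where
  "density E X Y = real (card (edges_between E X Y)) / (real (card X) * real (card Y))"

definition regular_pair :: "('a \<Rightarrow> 'a \<Rightarrow> bool) \<Rightarrow> real \<Rightarrow> 'a set \<Rightarrow> 'a set \<Rightarrow> bool" where
  "regular_pair E \<epsilon> X Y \<longleftrightarrow>
     (\<forall>X' Y'. X' \<subseteq> X \<longrightarrow> Y' \<subseteq> Y \<longrightarrow> real (card X') \<ge> \<epsilon> * real (card X)
        \<longrightarrow> real (card Y') \<ge> \<epsilon> * real (card Y)
        \<longrightarrow> \<bar>density E X' Y' - density E X Y\<bar> \<le> \<epsilon>)"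

definition skew_LKS ::
  "real \<Rightarrow> 'a set \<Rightarrow> ('a \<Rightarrow> 'a \<Rightarrow> bool) \<Rightarrow> 'a set set \<Rightarrow> 'a set set
     \<Rightarrow> nat \<Rightarrow> real \<Rightarrow> real \<Rightarrow> real \<Rightarrow> bool" where
  "skew_LKS r V E LC SC k \<eta>' \<epsilon> d \<longleftrightarrow> graph V E
     \<and> LC \<inter> SC = {} \<and> \<Union>(LC \<union> SC) = V \<and> (\<forall>C \<in> LC \<union> SC. C \<noteq> {})
     \<and> (\<forall>C \<in> LC \<union> SC. \<forall>C' \<in> LC \<union> SC. C \<noteq> C' \<longrightarrow> C \<inter> C' = {})
     \<and> real (card LC) \<ge> (1 + \<eta>') * real (card SC)
     \<and> (\<forall>L \<in> LC. \<forall>L' \<in> LC. card L = card L')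
     \<and> (\<forall>S \<in> SC. \<forall>S' \<in> SC. card S = card S')
     \<and> (\<forall>L \<in> LC. \<forall>S \<in> SC. r * real (card S) = (1 - r) * real (card L))
     \<and> (\<forall>L \<in> LC. \<forall>L' \<in> LC. L \<noteq> L' \<longrightarrow>
           regular_pair E \<epsilon> L L' \<and> (density E L L' = 0 \<or> density E L L' \<ge> d))
     \<and> (\<forall>L \<in> LC. \<forall>S \<in> SC.
           regular_pair E \<epsilon> L S \<and> (density E L S = 0 \<or> density E L S \<ge> d))
     \<and> (\<forall>C \<in> LC \<union> SC. \<forall>x\<in>C. \<forall>y\<in>C. \<not> E x y)
     \<and> (\<forall>S \<in> SC. \<forall>S' \<in> SC. S \<noteq> S' \<longrightarrow> (\<forall>x\<in>S. \<forall>y\<in>S'. \<not> E x y))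
     \<and> (\<forall>L \<in> LC. (\<Sum>v\<in>L. real (card {u. E v u})) / real (card L) \<ge> (1 + \<eta>') * real k)"

definition LS_matching ::
  "('a \<Rightarrow> 'a \<Rightarrow> bool) \<Rightarrow> 'a set set \<Rightarrow> 'a set set \<Rightarrow> ('a set \<times> 'a set) set \<Rightarrow> bool" where
  "LS_matching E LC SC M \<longleftrightarrow>
     (\<forall>(C, D) \<in> M. C \<in> SC \<and> D \<in> LC \<and> density E C D > 0)
     \<and> (\<forall>p\<in>M. \<forall>q\<in>M. p \<noteq> q \<longrightarrow> fst p \<noteq> fst q \<and> snd p \<noteq> snd q)"

definition avg_deg :: "('a \<Rightarrow> 'a \<Rightarrow> bool) \<Rightarrow> 'a set \<Rightarrow> 'a set set \<Rightarrow> real" where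
  "avg_deg E A T = (\<Sum>a\<in>A. real (card {y \<in> \<Union>T. E a y})) / real (card A)"

definition typical :: "('a \<Rightarrow> 'a \<Rightarrow> bool) \<Rightarrow> real \<Rightarrow> 'a set \<Rightarrow> 'a set \<Rightarrow> 'a \<Rightarrow> bool" where
  "typical E \<epsilon> X Y x \<longleftrightarrow> real (card {y \<in> Y. E x y}) \<ge> (density E X Y - \<epsilon>) * real (card Y)"

definition ultratypical :: "('a \<Rightarrow> 'a \<Rightarrow> bool) \<Rightarrow> real \<Rightarrow> 'a set set \<Rightarrow> 'a \<Rightarrow> bool" where
  "ultratypical E \<epsilon> Cl x \<longleftrightarrow> (\<exists>X \<in> Cl. x \<in> X \<and>
     real (card {Y \<in> Cl. Y \<noteq> X \<and> \<not> typical E \<epsilon> X Y x}) \<le> sqrt \<epsilon> * real (card Cl))"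

definition embedding ::
  "'b set \<Rightarrow> ('b \<Rightarrow> 'b \<Rightarrow> bool) \<Rightarrow> 'a set \<Rightarrow> ('a \<Rightarrow> 'a \<Rightarrow> bool) \<Rightarrow> ('b \<Rightarrow> 'a) \<Rightarrow> bool" where
  "embedding VF EF V E \<phi> \<longleftrightarrow> inj_on \<phi> VF \<and> \<phi> ` VF \<subseteq> V
     \<and> (\<forall>u v. EF u v \<longrightarrow> E (\<phi> u) (\<phi> v))"

end

theory Submission
  imports Defs
begin

lemma density_sym:
  assumes "\<forall>x y. E x y \<longrightarrow> E y x"
  shows "density E X Y = density E Y X"
proof -
  have "edges_between E Y X = prod.swap ` edges_between E X Y"
    using assms unfolding edges_between_def by (auto simp: image_iff)
  then have "card (edges_between E Y X) = card (edges_between E X Y)"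
    by (simp add: card_image)
  then show ?thesis unfolding density_def by (simp add: mult.commute)
qed

lemma regular_sym:
  assumes "\<forall>x y. E x y \<longrightarrow> E y x" "regular_pair E \<epsilon> X Y"
  shows "regular_pair E \<epsilon> Y X"
  using assms unfolding regular_pair_def
  by (metis density_sym)

lemma card_edges_sum:
  assumes "finite X" "finite Y"
  shows "card (edges_between E X Y) = (\<Sum>x\<in>X. card {y\<in>Y. E x y})"
proof -
  have "edges_between E X Y = Sigma X (\<lambda>x. {y\<in>Y. E x y})"
    unfolding edges_between_def by auto
  then show ?thesis using assms by (simp add: card_SigmaI)
qed

lemma double_count:
  assumes "finite X" "finite Y"
  shows "(\<Sum>x\<in>X. card {y\<in>Y. P x y}) = (\<Sum>y\<in>Y. card {x\<in>X. P x y})"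
proof -
  have c: "card {y\<in>Z. Q y} = (\<Sum>y\<in>Z. if Q y then 1 else 0)" if "finite Z" for Z and Q :: "_ \<Rightarrow> bool"
    using that by (simp add: sum.If_cases Int_def)
  have "(\<Sum>x\<in>X. card {y\<in>Y. P x y}) = (\<Sum>x\<in>X. \<Sum>y\<in>Y. if P x y then 1 else 0)"
    using c[OF assms(2)] by simp
  also have "\<dots> = (\<Sum>y\<in>Y. \<Sum>x\<in>X. if P x y then 1 else 0)" by (rule sum.swap)
  also have "\<dots> = (\<Sum>y\<in>Y. card {x\<in>X. P x y})" using c[OF assms(1)] by simp
  finally show ?thesis .
qed

lemma few_bad:
  assumes sym: "\<forall>x y. E x y \<longrightarrow> E y x" and reg: "regular_pair E \<epsilon> X Y"
    and fin: "finite X" "finite Y" and ne: "X \<noteq> {}" and sub: "Y' \<subseteq> Y"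
    and big: "\<epsilon> * card Y \<le> card Y'" and pos: "card Y' > 0"
    and dd: "d0 \<le> density E X Y" and ep: "\<epsilon> > 0"
  shows "real (card {x\<in>X. real (card {y\<in>Y'. E x y}) < (d0 - \<epsilon>) * card Y'}) < \<epsilon> * card X"
proof (rule ccontr)
  define B where "B = {x\<in>X. real (card {y\<in>Y'. E x y}) < (d0 - \<epsilon>) * card Y'}"
  assume "\<not> ?thesis"
  then have Bb: "\<epsilon> * card X \<le> card B" unfolding B_def by simp
  have "card X > 0" using ne fin by auto
  then have "card B > 0" using Bb ep
    by (metis mult_pos_pos not_less of_nat_0_less_iff order_le_less_trans)
  then have Bne: "B \<noteq> {}" and finB: "finite B" by (auto intro: card_ge_0_finite)
  have BX: "B \<subseteq> X" unfolding B_def by auto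
  have "\<bar>density E B Y' - density E X Y\<bar> \<le> \<epsilon>"
    using reg BX sub Bb big unfolding regular_pair_def by auto
  moreover have "density E B Y' < d0 - \<epsilon>"
  proof -
    have fY': "finite Y'" using sub fin finite_subset by auto
    have "(\<Sum>x\<in>B. real (card {y\<in>Y'. E x y})) < (\<Sum>x\<in>B. (d0 - \<epsilon>) * card Y')"
      by (rule sum_strict_mono) (use finB Bne B_def in auto)
    then have "real (card (edges_between E B Y')) < card B * ((d0 - \<epsilon>) * card Y')"
      using card_edges_sum[OF finB fY', of E] by simp
    then show ?thesis unfolding density_def
      using \<open>card B > 0\<close> pos by (simp add: divide_less_eq mult_ac)
  qed
  ultimately show False using dd by linarith
qed

lemma rtranclp_path:
  assumes "Q\<^sup>*\<^sup>* x y"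
  shows "\<exists>xs. distinct xs \<and> xs \<noteq> [] \<and> hd xs = x \<and> last xs = y
           \<and> (\<forall>i. Suc i < length xs \<longrightarrow> Q (xs!i) (xs!Suc i))"
  using assms
proof (induction rule: rtranclp_induct)
  case base
  then show ?case by (rule exI[of _ "[x]"]) auto
next
  case (step y z)
  then obtain xs where xs: "distinct xs" "xs \<noteq> []" "hd xs = x" "last xs = y"
    "\<forall>i. Suc i < length xs \<longrightarrow> Q (xs!i) (xs!Suc i)" by blast
  show ?case
  proof (cases "z \<in> set xs")
    case True
    then obtain i where i: "i < length xs" "xs!i = z" by (auto simp: in_set_conv_nth)
    let ?ys = "take (Suc i) xs"
    have "distinct ?ys" using xs by simp
    moreover have "?ys \<noteq> []" using xs by simp
    moreover have "hd ?ys = x" using xs i by (simp add: hd_take)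
    moreover have "last ?ys = z" using i by (simp add: take_Suc_conv_app_nth)
    moreover have "\<forall>j. Suc j < length ?ys \<longrightarrow> Q (?ys!j) (?ys!Suc j)"
      using xs(5) i by auto
    ultimately show ?thesis by blast
  next
    case False
    let ?ys = "xs @ [z]"
    have "distinct ?ys" using xs False by simp
    moreover have "hd ?ys = x" using xs by simp
    moreover have "\<forall>j. Suc j < length ?ys \<longrightarrow> Q (?ys!j) (?ys!Suc j)"
    proof (intro allI impI)
      fix j assume j: "Suc j < length ?ys"
      show "Q (?ys!j) (?ys!Suc j)"
      proof (cases "Suc j < length xs")
        case True then show ?thesis using xs(5) by (simp add: nth_append)
      next
        case False
        then have "j = length xs - 1" "Suc j = length xs" using j by auto
        then have "?ys!j = y" "?ys!Suc j = z" using xs(2,4)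
          by (auto simp: nth_append last_conv_nth)
        then show ?thesis using step by simp
      qed
    qed
    moreover have "?ys \<noteq> []" "last ?ys = z" by simp_all
    ultimately show ?thesis by blast
  qed
qed

lemma rtranclp_sym_rel:
  assumes "\<forall>x y. Q x y \<longrightarrow> Q y x" "Q\<^sup>*\<^sup>* x y"
  shows "Q\<^sup>*\<^sup>* y x"
  using assms(2)
proof (induction rule: rtranclp_induct)
  case base then show ?case by simp
next
  case (step y z)
  then show ?case using assms(1) by (meson converse_rtranclp_into_rtranclp)
qed

lemma unique_nb:
  assumes acyc: "\<not> (\<exists>xs. is_cycle EF xs)" and symF: "\<forall>x y. EF x y \<longrightarrow> EF y x"
    and path: "(\<lambda>u v. u\<in>S \<and> v\<in>S \<and> EF u v)\<^sup>*\<^sup>* p1 p2" and p1: "p1 \<in> S"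
    and w: "w \<notin> S" "EF w p1" "EF w p2"
  shows "p1 = p2"
proof (rule ccontr)
  assume ne: "p1 \<noteq> p2"
  obtain xs where xs: "distinct xs" "xs \<noteq> []" "hd xs = p1" "last xs = p2"
    "\<forall>i. Suc i < length xs \<longrightarrow> xs!i \<in> S \<and> xs!Suc i \<in> S \<and> EF (xs!i) (xs!Suc i)"
    using rtranclp_path[OF path] by blast
  have len: "length xs \<ge> 2"
  proof (rule ccontr)
    assume "\<not> ?thesis"
    moreover have "length xs \<noteq> 0" using xs(2) by simp
    ultimately have "length xs = 1" by linarith
    then obtain y where "xs = [y]" by (metis One_nat_def length_0_conv length_Suc_conv)
    then have "hd xs = last xs" by simp
    then show False using xs ne by simp
  qed
  have inS: "set xs \<subseteq> S"
  proof
    fix v assume "v \<in> set xs"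
    then obtain j where j: "j < length xs" "xs!j = v" by (auto simp: in_set_conv_nth)
    show "v \<in> S"
    proof (cases j)
      case 0 then show ?thesis using j xs(2,3) p1 by (simp add: hd_conv_nth)
    next
      case (Suc j') then show ?thesis using j xs(5) by force
    qed
  qed
  let ?ys = "xs @ [w]"
  have "is_cycle EF ?ys"
    unfolding is_cycle_def
  proof (intro conjI)
    show "3 \<le> length ?ys" using len by simp
    show "distinct ?ys" using xs(1) inS w(1) by auto
    show "\<forall>i. Suc i < length ?ys \<longrightarrow> EF (?ys!i) (?ys!Suc i)"
    proof (intro allI impI)
      fix j assume j: "Suc j < length ?ys"
      show "EF (?ys!j) (?ys!Suc j)"
      proof (cases "Suc j < length xs")
        case True then show ?thesis using xs(5) by (simp add: nth_append)
      next
        case False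
        then have "j = length xs - 1" "Suc j = length xs" using j by auto
        then have "?ys!j = p2" "?ys!Suc j = w" using xs(2,4)
          by (auto simp: nth_append last_conv_nth)
        then show ?thesis using w symF by simp
      qed
    qed
    show "EF (last ?ys) (hd ?ys)" using xs(2,3) w by simp
  qed
  then show False using acyc by blast
qed

lemma exit_edge:
  assumes "Q\<^sup>*\<^sup>* a v" "a \<in> S" "v \<notin> S"
  shows "\<exists>p w. p \<in> S \<and> w \<notin> S \<and> Q p w \<and> Q\<^sup>*\<^sup>* a w"
  using assms
proof (induction rule: rtranclp_induct)
  case base then show ?case by simp
next
  case (step y z)
  show ?case
  proof (cases "y \<in> S")
    case True then show ?thesis using step by (meson rtranclp.rtrancl_into_rtrancl)
  next
    case False then show ?thesis using step by blast
  qed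
qed

lemma greedy_tree:
  fixes EF :: "'b \<Rightarrow> 'b \<Rightarrow> bool" and E :: "'a \<Rightarrow> 'a \<Rightarrow> bool"
  assumes finK: "finite K" and aK: "a \<in> K"
    and conn: "\<forall>v\<in>K. (\<lambda>x y. x\<in>K \<and> y\<in>K \<and> EF x y)\<^sup>*\<^sup>* a v"
    and acyc: "\<not> (\<exists>xs. is_cycle EF xs)" and symF: "\<forall>x y. EF x y \<longrightarrow> EF y x"
    and irrF: "\<forall>x. \<not> EF x x"
    and symE: "\<forall>x y. E x y \<longrightarrow> E y x"
    and Ga: "Good a v0"
    and ext: "\<forall>p w u. p\<in>K \<longrightarrow> w\<in>K \<longrightarrow> EF p w \<longrightarrow> Good p u \<longrightarrow> card K \<le> card {v. Good w v \<and> E u v}"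
  shows "\<exists>\<phi>. inj_on \<phi> K \<and> (\<forall>w\<in>K. Good w (\<phi> w)) \<and> (\<forall>x\<in>K. \<forall>y\<in>K. EF x y \<longrightarrow> E (\<phi> x) (\<phi> y))"
proof -
  define P where "P j \<longleftrightarrow> (\<exists>S \<phi>. S \<subseteq> K \<and> card S = j \<and> a \<in> S
      \<and> (\<forall>v\<in>S. (\<lambda>x y. x\<in>S \<and> y\<in>S \<and> EF x y)\<^sup>*\<^sup>* a v) \<and> inj_on \<phi> S
      \<and> (\<forall>w\<in>S. Good w (\<phi> w)) \<and> (\<forall>x\<in>S. \<forall>y\<in>S. EF x y \<longrightarrow> E (\<phi> x) (\<phi> y)))" for j
  have "\<forall>j. 1 \<le> j \<longrightarrow> j \<le> card K \<longrightarrow> P j"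
  proof (intro allI)
    fix j show "1 \<le> j \<longrightarrow> j \<le> card K \<longrightarrow> P j"
    proof (induction j)
      case 0 then show ?case by simp
    next
      case (Suc j)
      show ?case
      proof (intro impI)
        assume j1: "1 \<le> Suc j" and jK: "Suc j \<le> card K"
        show "P (Suc j)"
        proof (cases "j = 0")
          case True
          show ?thesis unfolding P_def
            by (rule exI[of _ "{a}"], rule exI[of _ "\<lambda>_. v0"]) (use True aK Ga irrF in auto)
        next
          case False
          then obtain S \<phi> where S: "S \<subseteq> K" "card S = j" "a \<in> S"
            "\<forall>v\<in>S. (\<lambda>x y. x\<in>S \<and> y\<in>S \<and> EF x y)\<^sup>*\<^sup>* a v" "inj_on \<phi> S"
            "\<forall>w\<in>S. Good w (\<phi> w)" "\<forall>x\<in>S. \<forall>y\<in>S. EF x y \<longrightarrow> E (\<phi> x) (\<phi> y)"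
            using Suc jK unfolding P_def by auto
          have finS: "finite S" using S(1) finK finite_subset by auto
          have "S \<noteq> K" using S(2) jK by auto
          then obtain v where v: "v \<in> K" "v \<notin> S" using S(1) by auto
          obtain p w where pw: "p \<in> S" "w \<notin> S" "K \<noteq> {}"
             "(\<lambda>x y. x\<in>K \<and> y\<in>K \<and> EF x y) p w"
            using exit_edge[OF conn[rule_format, OF v(1)] S(3) v(2)] aK by blast
          have wK: "w \<in> K" and epw: "EF p w" using pw by auto
          let ?cand = "{v. Good w v \<and> E (\<phi> p) v}"
          have cK: "card K \<le> card ?cand" using ext S(1) pw(1) wK epw S(6) pw(1) by blast
          have "card K > 0" using finK aK by (auto simp: card_gt_0_iff)
          then have fincand: "finite ?cand" using cK by (metis card.infinite not_gr0 le_0_eq)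
          have "card (\<phi> ` S) \<le> card S" by (rule card_image_le[OF finS])
          also have "\<dots> < card K" using S(2) jK by simp
          finally have "card (\<phi> ` S) < card ?cand" using cK by simp
          have "\<not> ?cand \<subseteq> \<phi> ` S"
          proof
            assume "?cand \<subseteq> \<phi> ` S"
            then have "card ?cand \<le> card (\<phi> ` S)" using finS by (simp add: card_mono)
            then show False using \<open>card (\<phi> ` S) < card ?cand\<close> by simp
          qed
          then obtain u where u: "u \<in> ?cand" "u \<notin> \<phi> ` S" by blast
          define \<phi>' where "\<phi>' = \<phi>(w := u)"
          define S' where "S' = insert w S"
          have symS: "\<forall>x y. (\<lambda>x y. x\<in>S \<and> y\<in>S \<and> EF x y) x y \<longrightarrow> (\<lambda>x y. x\<in>S \<and> y\<in>S \<and> EF x y) y x"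
            using symF by blast
          have nbp: "\<And>y. y \<in> S \<Longrightarrow> EF w y \<Longrightarrow> y = p"
          proof -
            fix y assume y: "y \<in> S" "EF w y"
            have "(\<lambda>x y. x\<in>S \<and> y\<in>S \<and> EF x y)\<^sup>*\<^sup>* p a"
              using rtranclp_sym_rel[OF symS] S(4) pw(1) by blast
            then have "(\<lambda>x y. x\<in>S \<and> y\<in>S \<and> EF x y)\<^sup>*\<^sup>* p y"
              using S(4) y(1) by (meson rtranclp_trans)
            then show "y = p"
              using unique_nb[OF acyc symF _ pw(1) pw(2)] y epw symF by metis
          qed
          show ?thesis unfolding P_def
          proof (rule exI[of _ S'], rule exI[of _ \<phi>'], intro conjI)
            show "S' \<subseteq> K" using S(1) wK S'_def by auto
            show "card S' = Suc j" using S(2) finS pw(2) S'_def by simp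
            show "a \<in> S'" using S(3) S'_def by simp
            show "\<forall>v\<in>S'. (\<lambda>x y. x\<in>S' \<and> y\<in>S' \<and> EF x y)\<^sup>*\<^sup>* a v"
            proof
              fix x assume x: "x \<in> S'"
              have mono: "(\<lambda>x y. x\<in>S \<and> y\<in>S \<and> EF x y)\<^sup>*\<^sup>* a y \<Longrightarrow>
                  (\<lambda>x y. x\<in>S' \<and> y\<in>S' \<and> EF x y)\<^sup>*\<^sup>* a y" for y
                by (rule rtranclp_mono[THEN predicate2D, rotated], assumption) (auto simp: S'_def)
              show "(\<lambda>x y. x\<in>S' \<and> y\<in>S' \<and> EF x y)\<^sup>*\<^sup>* a x"
              proof (cases "x = w")
                case True
                have "(\<lambda>x y. x\<in>S' \<and> y\<in>S' \<and> EF x y)\<^sup>*\<^sup>* a p" using mono S(4) pw(1) by blast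
                then show ?thesis using True epw pw(1) S'_def
                  by (auto intro: rtranclp.rtrancl_into_rtrancl)
              next
                case False then show ?thesis using mono S(4) x S'_def by auto
              qed
            qed
            show "inj_on \<phi>' S'" using S(5) u(2) pw(2) unfolding \<phi>'_def S'_def
              by (auto simp: inj_on_def image_iff)
            show "\<forall>x\<in>S'. Good x (\<phi>' x)" using S(6) u(1) pw(2) unfolding \<phi>'_def S'_def by auto
            show "\<forall>x\<in>S'. \<forall>y\<in>S'. EF x y \<longrightarrow> E (\<phi>' x) (\<phi>' y)"
            proof (intro ballI impI)
              fix x y assume x: "x \<in> S'" and y: "y \<in> S'" and e: "EF x y"
              show "E (\<phi>' x) (\<phi>' y)"
              proof (cases "x = w")
                case True
                then have "y \<noteq> w" using e irrF by auto
                then have "y \<in> S" using y S'_def by auto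
                then have "y = p" using nbp e True by simp
                then show ?thesis using True u(1) symE pw(2) \<open>y \<noteq> w\<close> unfolding \<phi>'_def by auto
              next
                case False
                then have xS: "x \<in> S" using x S'_def by auto
                show ?thesis
                proof (cases "y = w")
                  case True
                  then have "x = p" using nbp xS e symF by blast
                  then show ?thesis using True u(1) False unfolding \<phi>'_def by auto
                next
                  case False
                  then have "y \<in> S" using y S'_def by auto
                  then show ?thesis using S(7) xS e False \<open>x \<noteq> w\<close> unfolding \<phi>'_def by auto
                qed
              qed
            qed
          qed
        qed
      qed
    qed
  qed
  moreover have "1 \<le> card K" using finK aK by (auto simp: Suc_le_eq card_gt_0_iff)
  ultimately have "P (card K)" by blast
  then obtain S \<phi> where S: "S \<subseteq> K" "card S = card K" "inj_on \<phi> S"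
    "\<forall>w\<in>S. Good w (\<phi> w)" "\<forall>x\<in>S. \<forall>y\<in>S. EF x y \<longrightarrow> E (\<phi> x) (\<phi> y)"
    unfolding P_def by blast
  have "S = K" using S(1,2) finK card_subset_eq by blast
  then show ?thesis using S by blast
qed

lemma comp_eq:
  assumes sym: "\<forall>x y. EF x y \<longrightarrow> EF y x" and K: "K \<in> components EF W" and a: "a \<in> K"
  shows "K = {y\<in>W. (\<lambda>u v. u \<in> W \<and> v \<in> W \<and> EF u v)\<^sup>*\<^sup>* a y}"
proof -
  let ?Q = "\<lambda>u v. u \<in> W \<and> v \<in> W \<and> EF u v"
  obtain x where x: "x \<in> W" "K = {y\<in>W. ?Q\<^sup>*\<^sup>* x y}" using K unfolding components_def by auto
  have xa: "?Q\<^sup>*\<^sup>* x a" using a x by auto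
  have ax: "?Q\<^sup>*\<^sup>* a x" using rtranclp_sym_rel[of ?Q, OF _ xa] sym by blast
  show ?thesis using x xa ax by (auto intro: rtranclp_trans)
qed

lemma comp_sub: "K \<in> components EF W \<Longrightarrow> K \<subseteq> W"
  unfolding components_def by auto

lemma comp_closed:
  assumes sym: "\<forall>x y. EF x y \<longrightarrow> EF y x" and K: "K \<in> components EF W"
    and "u \<in> K" "v \<in> W" "EF u v"
  shows "v \<in> K"
proof -
  have "K = {y\<in>W. (\<lambda>u v. u \<in> W \<and> v \<in> W \<and> EF u v)\<^sup>*\<^sup>* u y}" using comp_eq[OF sym K assms(3)] .
  moreover have "u \<in> W" using assms(3) comp_sub[OF K] by auto
  ultimately show ?thesis using assms by auto
qed

lemma comp_disj:
  assumes sym: "\<forall>x y. EF x y \<longrightarrow> EF y x" and "K1 \<in> components EF W" "K2 \<in> components EF W"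
    and "v \<in> K1" "v \<in> K2"
  shows "K1 = K2"
  using comp_eq[OF sym assms(2,4)] comp_eq[OF sym assms(3,5)] by simp

lemma comp_cover:
  assumes "v \<in> W" shows "\<exists>K\<in>components EF W. v \<in> K"
  using assms unfolding components_def by auto

lemma comp_finite:
  assumes "finite W" shows "finite (components EF W)"
proof -
  have "components EF W \<subseteq> Pow W" unfolding components_def by auto
  then show ?thesis using assms finite_subset by blast
qed

lemma comp_conn:
  assumes sym: "\<forall>x y. EF x y \<longrightarrow> EF y x" and K: "K \<in> components EF W" and a: "a \<in> K"
  shows "\<forall>v\<in>K. (\<lambda>x y. x\<in>K \<and> y\<in>K \<and> EF x y)\<^sup>*\<^sup>* a v"
proof
  fix v assume v: "v \<in> K"
  let ?Q = "\<lambda>u v. u \<in> W \<and> v \<in> W \<and> EF u v"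
  have "?Q\<^sup>*\<^sup>* a v" using comp_eq[OF sym K a] v by auto
  then have "v \<in> K \<and> (\<lambda>x y. x\<in>K \<and> y\<in>K \<and> EF x y)\<^sup>*\<^sup>* a v"
  proof (induction rule: rtranclp_induct)
    case base then show ?case using a by simp
  next
    case (step y z)
    then have "z \<in> K" using comp_closed[OF sym K] by blast
    then show ?case using step by (auto intro: rtranclp.rtrancl_into_rtrancl)
  qed
  then show "(\<lambda>x y. x\<in>K \<and> y\<in>K \<and> EF x y)\<^sup>*\<^sup>* a v" by simp
qed

locale ctx =
  fixes r \<eta> d \<epsilon> \<beta> :: real and n Nmax k :: nat
    and VF :: "'b set" and EF :: "'b \<Rightarrow> 'b \<Rightarrow> bool" and R F1 F2 :: "'b set"
    and V :: "'a set" and E :: "'a \<Rightarrow> 'a \<Rightarrow> bool" and LC SC :: "'a set set"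
    and \<eta>' :: real and U :: "'a set" and M :: "('a set \<times> 'a set) set" and A :: "'a set"
    and \<psi> :: "'b \<Rightarrow> 'a"
  assumes r0: "0 < r" and r2: "r \<le> 1/2" and eta0: "0 < \<eta>" and d0: "0 < d" and ep0: "0 < \<epsilon>"
    and epA: "sqrt \<epsilon> \<le> r*\<eta>/8" and epB: "\<epsilon> \<le> r*\<eta>/8" and epC: "\<epsilon> \<le> d*r*\<eta>/96"
    and epD: "\<epsilon> \<le> d/2" and epE: "\<epsilon> \<le> \<eta>/8" and epF: "\<epsilon> \<le> 1"
    and beta0: "0 < \<beta>" and betaB: "\<beta> * (real Nmax + 1) \<le> min d 1 * r^2 * \<eta> / 32"
    and AF: "anchored_forest VF EF R (\<beta> * real n)"
    and CC: "colour_classes VF EF F1 F2" and RF2: "R \<subseteq> F2"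
    and bal: "\<forall>K \<in> components EF (VF - R). card (F1 \<inter> K) \<le> card (F2 \<inter> K)"
    and LKS: "skew_LKS r V E LC SC k \<eta>' \<epsilon> d" and nV: "card V = n" and Nm: "card (LC \<union> SC) \<le> Nmax"
    and UV: "U \<subseteq> V" and LSM: "LS_matching E LC SC M" and Acl: "A \<in> LC \<union> SC"
    and deg: "avg_deg E A (fst ` M) \<ge> (1 - r) / r * real (card F2)
             + (\<Sum>(C, D) \<in> M. max (real (card (U \<inter> C))) ((1 - r) / r * real (card (U \<inter> D))))
             + \<eta> * real n"
    and psi_inj: "inj_on \<psi> R" and psi_ut: "\<psi> ` R \<subseteq> {x \<in> A. ultratypical E \<epsilon> (LC \<union> SC) x}"
begin

abbreviation "Cl \<equiv> LC \<union> SC"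
definition "q = (1 - r) / r"

lemma q1: "q \<ge> 1" using r0 r2 unfolding q_def by (simp add: field_simps)
lemma rq: "r * q = 1 - r" using r0 unfolding q_def by simp

lemma LK1: "graph V E"
  using LKS unfolding skew_LKS_def by (elim conjE) assumption
lemma LK2: "LC \<inter> SC = {}"
  using LKS unfolding skew_LKS_def by (elim conjE) assumption
lemma LK3: "\<Union>(LC \<union> SC) = V"
  using LKS unfolding skew_LKS_def by (elim conjE) assumption
lemma LK4: "\<forall>C \<in> LC \<union> SC. C \<noteq> {}"
  using LKS unfolding skew_LKS_def by (elim conjE) assumption
lemma LK5: "\<forall>C \<in> LC \<union> SC. \<forall>C' \<in> LC \<union> SC. C \<noteq> C' \<longrightarrow> C \<inter> C' = {}"
  using LKS unfolding skew_LKS_def by (elim conjE) assumption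
lemma LK6: "\<forall>L \<in> LC. \<forall>L' \<in> LC. card L = card L'"
  using LKS unfolding skew_LKS_def by (elim conjE) assumption
lemma LK7: "\<forall>S \<in> SC. \<forall>S' \<in> SC. card S = card S'"
  using LKS unfolding skew_LKS_def by (elim conjE) assumption
lemma LK8: "\<forall>L \<in> LC. \<forall>S \<in> SC. r * real (card S) = (1 - r) * real (card L)"
  using LKS unfolding skew_LKS_def by (elim conjE) assumption
lemma LK9: "\<forall>L \<in> LC. \<forall>L' \<in> LC. L \<noteq> L' \<longrightarrow>
           regular_pair E \<epsilon> L L' \<and> (density E L L' = 0 \<or> density E L L' \<ge> d)"
  using LKS unfolding skew_LKS_def by (elim conjE) assumption
lemma LK10: "\<forall>L \<in> LC. \<forall>S \<in> SC.
           regular_pair E \<epsilon> L S \<and> (density E L S = 0 \<or> density E L S \<ge> d)"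
  using LKS unfolding skew_LKS_def by (elim conjE) assumption
lemma LK11: "\<forall>C \<in> LC \<union> SC. \<forall>x\<in>C. \<forall>y\<in>C. \<not> E x y"
  using LKS unfolding skew_LKS_def by (elim conjE) assumption
lemma LK12: "\<forall>S \<in> SC. \<forall>S' \<in> SC. S \<noteq> S' \<longrightarrow> (\<forall>x\<in>S. \<forall>y\<in>S'. \<not> E x y)"
  using LKS unfolding skew_LKS_def by (elim conjE) assumption
lemmas LK = LK1 LK2 LK3 LK4 LK5 LK6 LK7 LK8 LK9 LK10 LK11 LK12


lemma graphV: "graph V E" by (rule LK(1))
lemma symE: "\<forall>x y. E x y \<longrightarrow> E y x" using graphV unfolding graph_def by blast
lemma finV: "finite V" using graphV unfolding graph_def by blast
lemma LS_disj: "LC \<inter> SC = {}" by (rule LK(2))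
lemma Cl_union: "\<Union>Cl = V" by (rule LK(3))
lemma Cl_ne: "X \<in> Cl \<Longrightarrow> X \<noteq> {}" using LK(4) by blast
lemma Cl_disj: "X \<in> Cl \<Longrightarrow> Y \<in> Cl \<Longrightarrow> X \<noteq> Y \<Longrightarrow> X \<inter> Y = {}"
  using LK(5) by blast
lemma Cl_sub: "X \<in> Cl \<Longrightarrow> X \<subseteq> V" using Cl_union by blast
lemma Cl_fin: "X \<in> Cl \<Longrightarrow> finite X" using Cl_sub finV finite_subset by blast
lemma Cl_finite: "finite Cl" using Cl_union finV by (metis finite_UnionD)
lemma Cl_cardpos: "X \<in> Cl \<Longrightarrow> card X > 0" using Cl_ne Cl_fin by (simp add: card_gt_0_iff)
lemma Cl_eq: "X \<in> Cl \<Longrightarrow> Y \<in> Cl \<Longrightarrow> x \<in> X \<Longrightarrow> x \<in> Y \<Longrightarrow> X = Y" using Cl_disj by blast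
lemma L_eq: "L \<in> LC \<Longrightarrow> L' \<in> LC \<Longrightarrow> card L = card L'" using LK(6) by blast
lemma S_eq: "S \<in> SC \<Longrightarrow> S' \<in> SC \<Longrightarrow> card S = card S'" using LK(7) by blast
lemma LS_rel: "L \<in> LC \<Longrightarrow> S \<in> SC \<Longrightarrow> r * card S = (1 - r) * card L"
  using LK(8) by blast
lemma SqL: "L \<in> LC \<Longrightarrow> S \<in> SC \<Longrightarrow> real (card S) = q * card L"
  using LS_rel r0 unfolding q_def by (simp add: field_simps)
lemma reg_LL: "L \<in> LC \<Longrightarrow> L' \<in> LC \<Longrightarrow> L \<noteq> L' \<Longrightarrow>
    regular_pair E \<epsilon> L L' \<and> (density E L L' = 0 \<or> density E L L' \<ge> d)"
  using LK(9) by blast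
lemma reg_LS: "L \<in> LC \<Longrightarrow> S \<in> SC \<Longrightarrow>
    regular_pair E \<epsilon> L S \<and> (density E L S = 0 \<or> density E L S \<ge> d)"
  using LK(10) by blast
lemma no_in: "X \<in> Cl \<Longrightarrow> x \<in> X \<Longrightarrow> y \<in> X \<Longrightarrow> \<not> E x y"
  using LK(11) by blast
lemma no_SS: "S \<in> SC \<Longrightarrow> S' \<in> SC \<Longrightarrow> S \<noteq> S' \<Longrightarrow> x \<in> S \<Longrightarrow> y \<in> S' \<Longrightarrow> \<not> E x y"
  using LK(12) by blast

lemma size_rel: "X \<in> Cl \<Longrightarrow> Y \<in> Cl \<Longrightarrow> real (card Y) \<le> q * card X"
proof -
  assume X: "X \<in> Cl" and Y: "Y \<in> Cl"
  have q1': "q \<ge> 1" by (rule q1)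
  show ?thesis
  proof (cases "X \<in> LC")
    case XL: True
    show ?thesis
    proof (cases "Y \<in> LC")
      case True then show ?thesis using XL L_eq[OF XL True] q1' by (simp add: mult_le_cancel_right1)
    next
      case False then have "Y \<in> SC" using Y by auto
      then show ?thesis using SqL[OF XL] by simp
    qed
  next
    case XS': False
    then have XS: "X \<in> SC" using X by auto
    show ?thesis
    proof (cases "Y \<in> LC")
      case True
      have "real (card X) = q * card Y" using SqL[OF True XS] .
      have "1 * real (card Y) \<le> q * card Y" by (rule mult_right_mono) (use q1' in auto)
      then have "real (card Y) \<le> card X" using \<open>real (card X) = q * card Y\<close> by simp
      also have "\<dots> \<le> q * card X" using q1' by (simp add: mult_le_cancel_right1)
      finally show ?thesis .
    next
      case False then have "Y \<in> SC" using Y by auto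
      then show ?thesis using S_eq[OF XS] q1' by (simp add: mult_le_cancel_right1)
    qed
  qed
qed

lemma sum_Cl: "(\<Sum>X\<in>Cl. card X) = n"
proof -
  have "card (\<Union>Cl) = sum card Cl"
    by (rule card_Union_disjoint) (use Cl_disj Cl_fin in \<open>auto simp: pairwise_def disjnt_def\<close>)
  then show ?thesis using Cl_union nV by simp
qed

lemma Cl_card_pos: "X \<in> Cl \<Longrightarrow> card Cl > 0" using Cl_finite by (auto simp: card_gt_0_iff)

lemma upper_size: "X \<in> Cl \<Longrightarrow> real (card Cl) * card X \<le> q * n"
proof -
  assume X: "X \<in> Cl"
  have "real (card Cl) * card X = (\<Sum>Y\<in>Cl. real (card X))" by simp
  also have "\<dots> \<le> (\<Sum>Y\<in>Cl. q * card Y)" by (rule sum_mono) (use size_rel X in auto)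
  also have "\<dots> = q * (\<Sum>Y\<in>Cl. real (card Y))" by (simp add: sum_distrib_left)
  also have "(\<Sum>Y\<in>Cl. real (card Y)) = real n" using sum_Cl by (metis of_nat_sum)
  finally show ?thesis by simp
qed

lemma lower_size: "X \<in> Cl \<Longrightarrow> r * n \<le> (real Nmax + 1) * card X"
proof -
  assume X: "X \<in> Cl"
  have "real n = (\<Sum>Y\<in>Cl. real (card Y))" using sum_Cl by (metis of_nat_sum)
  also have "\<dots> \<le> (\<Sum>Y\<in>Cl. q * card X)" by (rule sum_mono) (use size_rel X in auto)
  also have "\<dots> = card Cl * (q * card X)" by simp
  also have "\<dots> \<le> (real Nmax + 1) * (q * card X)"
    using Nm q1 by (intro mult_right_mono) auto
  finally have "r * n \<le> r * ((real Nmax + 1) * (q * card X))" using r0 by simp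
  also have "\<dots> = (r * q) * ((real Nmax + 1) * card X)" by (simp add: algebra_simps)
  also have "\<dots> = (1 - r) * ((real Nmax + 1) * card X)" using rq by simp
  also have "\<dots> \<le> (real Nmax + 1) * card X" by (rule mult_left_le_one_le) (use r0 r2 in auto)
  finally show ?thesis .
qed

lemma npos: "n > 0"
  using Cl_cardpos[OF Acl] Cl_sub[OF Acl] finV nV
  by (metis card_gt_0_iff card_mono le_0_eq neq0_conv)

end

context ctx
begin

lemma AFp1: "forest VF EF"
  using AF unfolding anchored_forest_def by (elim conjE) assumption
lemma AFp2: "R \<subseteq> VF"
  using AF unfolding anchored_forest_def by (elim conjE) assumption
lemma AFp3: "\<forall>K \<in> components EF (VF - R).
           2 \<le> card K \<and> real (card K) \<le> \<beta> * real n
           \<and> 1 \<le> card {x \<in> R. \<exists>y\<in>K. EF x y} \<and> card {x \<in> R. \<exists>y\<in>K. EF x y} \<le> 2"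
  using AF unfolding anchored_forest_def by (elim conjE) assumption
lemma AFp4: "\<forall>x\<in>R. \<forall>y\<in>R. x \<noteq> y \<longrightarrow> dist_at_least EF 4 x y"
  using AF unfolding anchored_forest_def by (elim conjE) assumption
lemmas AFp = AFp1 AFp2 AFp3 AFp4

lemma forestF: "forest VF EF" by (rule AFp(1))
lemma graphF: "graph VF EF" using forestF unfolding forest_def by blast
lemma symF: "\<forall>x y. EF x y \<longrightarrow> EF y x" using graphF unfolding graph_def by blast
lemma irrF: "\<forall>x. \<not> EF x x" using graphF unfolding graph_def by blast
lemma finVF: "finite VF" using graphF unfolding graph_def by blast
lemma EF_in: "EF x y \<Longrightarrow> x \<in> VF \<and> y \<in> VF" using graphF unfolding graph_def by blast
lemma acyc: "\<not> (\<exists>xs. is_cycle EF xs)" using forestF unfolding forest_def by blast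
lemma RVF: "R \<subseteq> VF" by (rule AFp(2))
lemma F12: "F1 \<union> F2 = VF" "F1 \<inter> F2 = {}"
  using CC unfolding colour_classes_def by blast+
lemma F12e: "EF x y \<Longrightarrow> (x \<in> F1 \<and> y \<in> F2) \<or> (x \<in> F2 \<and> y \<in> F1)"
  using CC unfolding colour_classes_def by blast

lemma AF_comp: "K \<in> components EF (VF - R) \<Longrightarrow>
    2 \<le> card K \<and> real (card K) \<le> \<beta> * real n
    \<and> 1 \<le> card {x \<in> R. \<exists>y\<in>K. EF x y} \<and> card {x \<in> R. \<exists>y\<in>K. EF x y} \<le> 2"
  using AFp(3) by blast

lemma AF_dist: "x \<in> R \<Longrightarrow> y \<in> R \<Longrightarrow> x \<noteq> y \<Longrightarrow> dist_at_least EF 4 x y"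
  using AFp(4) by blast

lemma R_two_nb: "x \<in> R \<Longrightarrow> y \<in> R \<Longrightarrow> EF x w \<Longrightarrow> EF y w \<Longrightarrow> x = y"
proof (rule ccontr)
  assume a: "x \<in> R" "y \<in> R" "EF x w" "EF y w" "x \<noteq> y"
  have "\<forall>i. Suc i < length [x,w,y] \<longrightarrow> EF ([x,w,y]!i) ([x,w,y]!Suc i)"
  proof (intro allI impI)
    fix i assume "Suc i < length [x,w,y]"
    then have "i = 0 \<or> i = 1" by auto
    then show "EF ([x,w,y]!i) ([x,w,y]!Suc i)" using a symF by auto
  qed
  then have "walk EF [x, w, y]" unfolding walk_def by simp
  then show False using AF_dist[OF a(1,2,5)] unfolding dist_at_least_def by force
qed

lemma A_L: "A \<in> LC"
proof (rule ccontr)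
  assume "A \<notin> LC"
  then have AS: "A \<in> SC" using Acl by auto
  have fstS: "fst ` M \<subseteq> SC" using LSM unfolding LS_matching_def by auto
  have "\<forall>a\<in>A. {y \<in> \<Union>(fst ` M). E a y} = {}"
  proof (intro ballI equalityI subsetI)
    fix a y assume a: "a \<in> A" and y: "y \<in> {y \<in> \<Union>(fst ` M). E a y}"
    then obtain C where C: "C \<in> fst ` M" "y \<in> C" "E a y" by auto
    have "C \<in> SC" using C fstS by auto
    then show "y \<in> {}" using no_SS[OF AS \<open>C \<in> SC\<close>] no_in[of A] Acl a C by (cases "A = C") auto
  qed simp
  then have "(\<Sum>a\<in>A. real (card {y \<in> \<Union>(fst ` M). E a y})) = 0"
    by (intro sum.neutral) (metis card.empty of_nat_0)
  then have "avg_deg E A (fst ` M) = 0" unfolding avg_deg_def by simp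
  moreover have "(\<Sum>(C, D) \<in> M. max (real (card (U \<inter> C))) ((1 - r) / r * real (card (U \<inter> D)))) \<ge> 0"
    by (rule sum_nonneg) auto
  moreover have "(1 - r) / r * real (card F2) \<ge> 0" using r0 r2 by simp
  moreover have "\<eta> * real n > 0" using eta0 npos by simp
  ultimately show False using deg by linarith
qed

lemma M_facts: "p \<in> M \<Longrightarrow> fst p \<in> SC \<and> snd p \<in> LC \<and> density E (fst p) (snd p) > 0"
  using LSM unfolding LS_matching_def by auto
lemma M_inj: "p \<in> M \<Longrightarrow> p' \<in> M \<Longrightarrow> p \<noteq> p' \<Longrightarrow> fst p \<noteq> fst p' \<and> snd p \<noteq> snd p'"
  using LSM unfolding LS_matching_def by auto
lemma M_finite: "finite M"
proof -
  have "M \<subseteq> Cl \<times> Cl" using M_facts by (auto simp: mem_Times_iff)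
  then show ?thesis using Cl_finite finite_subset by blast
qed

lemma M_dens: "p \<in> M \<Longrightarrow> density E (snd p) (fst p) \<ge> d \<and> density E (fst p) (snd p) \<ge> d"
proof -
  assume p: "p \<in> M"
  have f: "fst p \<in> SC" "snd p \<in> LC" "density E (fst p) (snd p) > 0" using M_facts[OF p] by auto
  have s: "density E (snd p) (fst p) = density E (fst p) (snd p)" using density_sym[OF symE] by blast
  show ?thesis using reg_LS[OF f(2,1)] f(3) s by auto
qed

lemma M_reg: "p \<in> M \<Longrightarrow> regular_pair E \<epsilon> (snd p) (fst p) \<and> regular_pair E \<epsilon> (fst p) (snd p)"
proof -
  assume p: "p \<in> M"
  have f: "fst p \<in> SC" "snd p \<in> LC" using M_facts[OF p] by auto
  have "regular_pair E \<epsilon> (snd p) (fst p)" using reg_LS[OF f(2,1)] by simp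
  then show ?thesis using regular_sym[OF symE] by blast
qed

lemma UT_few:
  assumes X: "X \<in> LC"
  shows "real (card {x\<in>X. \<not> ultratypical E \<epsilon> Cl x}) \<le> sqrt \<epsilon> * card X"
proof -
  define cnt where "cnt x = card {Y\<in>Cl. Y \<noteq> X \<and> \<not> typical E \<epsilon> X Y x}" for x
  have XC: "X \<in> Cl" using X by simp
  have finX: "finite X" using Cl_fin XC by blast
  have atyp: "real (card {x\<in>X. Y \<noteq> X \<and> \<not> typical E \<epsilon> X Y x}) \<le> \<epsilon> * card X" if Y: "Y \<in> Cl" for Y
  proof (cases "Y = X")
    case True then show ?thesis using ep0 by simp
  next
    case False
    have reg: "regular_pair E \<epsilon> X Y"
    proof (cases "Y \<in> LC")
      case True then show ?thesis using reg_LL[OF X True] False by auto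
    next
      case F: False then have "Y \<in> SC" using Y by auto
      then show ?thesis using reg_LS[OF X] by auto
    qed
    have e1: "\<epsilon> * card Y \<le> card Y" by (rule mult_left_le_one_le) (use epF ep0 in auto)
    have "real (card {x\<in>X. real (card {y\<in>Y. E x y}) < (density E X Y - \<epsilon>) * card Y}) < \<epsilon> * card X"
      by (rule few_bad[OF symE reg finX Cl_fin[OF Y] Cl_ne[OF XC] subset_refl e1 Cl_cardpos[OF Y] order_refl ep0])
    moreover have "{x\<in>X. Y \<noteq> X \<and> \<not> typical E \<epsilon> X Y x} =
        {x\<in>X. real (card {y\<in>Y. E x y}) < (density E X Y - \<epsilon>) * card Y}"
      using False unfolding typical_def by (simp add: not_le)
    ultimately show ?thesis by simp
  qed
  have eq: "(\<Sum>x\<in>X. cnt x) = (\<Sum>Y\<in>Cl. card {x\<in>X. Y \<noteq> X \<and> \<not> typical E \<epsilon> X Y x})"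
    unfolding cnt_def by (rule double_count[OF finX Cl_finite])
  moreover have "(\<Sum>Y\<in>Cl. real (card {x\<in>X. Y \<noteq> X \<and> \<not> typical E \<epsilon> X Y x})) \<le> (\<Sum>Y\<in>Cl. \<epsilon> * card X)"
    by (rule sum_mono) (use atyp in auto)
  ultimately have "real (\<Sum>x\<in>X. cnt x) \<le> (\<Sum>Y\<in>Cl. \<epsilon> * card X)"
    by (simp only: eq of_nat_sum)
  then have S: "real (\<Sum>x\<in>X. cnt x) \<le> card Cl * (\<epsilon> * card X)" by simp
  define NU where "NU = {x\<in>X. \<not> ultratypical E \<epsilon> Cl x}"
  have NUX: "NU \<subseteq> X" unfolding NU_def by auto
  have big: "sqrt \<epsilon> * card Cl < cnt x" if x: "x \<in> NU" for x
  proof (rule ccontr)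
    assume "\<not> sqrt \<epsilon> * card Cl < cnt x"
    then have "real (cnt x) \<le> sqrt \<epsilon> * card Cl" by simp
    then have "ultratypical E \<epsilon> Cl x" unfolding ultratypical_def cnt_def using XC x NU_def by blast
    then show False using x NU_def by simp
  qed
  have "(\<Sum>x\<in>NU. sqrt \<epsilon> * card Cl) \<le> (\<Sum>x\<in>NU. real (cnt x))"
    by (rule sum_mono) (use big in \<open>simp add: less_imp_le\<close>)
  then have "card NU * (sqrt \<epsilon> * card Cl) \<le> (\<Sum>x\<in>NU. real (cnt x))" by simp
  also have "\<dots> \<le> (\<Sum>x\<in>X. real (cnt x))" by (rule sum_mono2[OF finX NUX]) auto
  also have "\<dots> \<le> card Cl * (\<epsilon> * card X)" using S by simp
  finally have ineq: "card NU * (sqrt \<epsilon> * card Cl) \<le> card Cl * (\<epsilon> * card X)" .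
  have cp: "real (card Cl) > 0" using Cl_card_pos[OF XC] by simp
  have sp: "sqrt \<epsilon> > 0" using ep0 by simp
  have ss: "sqrt \<epsilon> * sqrt \<epsilon> = \<epsilon>" using ep0 by simp
  have "(sqrt \<epsilon> * card X) * (sqrt \<epsilon> * card Cl) = (sqrt \<epsilon> * sqrt \<epsilon>) * (card X * card Cl)"
    by (simp add: algebra_simps)
  also have "\<dots> = card Cl * (\<epsilon> * card X)" using ss by simp
  finally have eqq: "(sqrt \<epsilon> * card X) * (sqrt \<epsilon> * card Cl) = card Cl * (\<epsilon> * card X)" .
  have "card NU * (sqrt \<epsilon> * card Cl) \<le> (sqrt \<epsilon> * card X) * (sqrt \<epsilon> * card Cl)"
    using ineq eqq by linarith
  then have "real (card NU) \<le> sqrt \<epsilon> * card X"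
    by (rule mult_right_le_imp_le) (use cp sp in simp)
  then show ?thesis unfolding NU_def .
qed

end

context ctx
begin

definition "mx p = max (real (card (U \<inter> fst p))) ((1 - r) / r * real (card (U \<inter> snd p)))"
definition "\<gamma> = r * \<eta> / 4"

lemma dens_le1: "finite X \<Longrightarrow> finite Y \<Longrightarrow> density E X Y \<le> 1"
proof -
  assume f: "finite X" "finite Y"
  have "edges_between E X Y \<subseteq> X \<times> Y" unfolding edges_between_def by auto
  then have "card (edges_between E X Y) \<le> card X * card Y" using f
    by (metis card_cartesian_product card_mono finite_cartesian_product)
  then have "real (card (edges_between E X Y)) \<le> real (card X) * real (card Y)"
    by (metis of_nat_le_iff of_nat_mult)
  then show ?thesis unfolding density_def
    by (cases "real (card X) * real (card Y) = 0") (auto simp: divide_le_eq)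
qed

lemma dens_nonneg: "density E X Y \<ge> 0" unfolding density_def by simp

lemma M_disj_fst: "p \<in> M \<Longrightarrow> p' \<in> M \<Longrightarrow> p \<noteq> p' \<Longrightarrow> fst p \<inter> fst p' = {}"
  using M_inj M_facts Cl_disj by blast
lemma M_disj_snd: "p \<in> M \<Longrightarrow> p' \<in> M \<Longrightarrow> p \<noteq> p' \<Longrightarrow> snd p \<inter> snd p' = {}"
  using M_inj M_facts Cl_disj by blast
lemma M_disj_fs: "p \<in> M \<Longrightarrow> p' \<in> M \<Longrightarrow> fst p \<inter> snd p' = {}"
proof -
  assume p: "p \<in> M" "p' \<in> M"
  have "fst p \<in> SC" "snd p' \<in> LC" using M_facts p by auto
  then have "fst p \<noteq> snd p'" using LS_disj by auto
  then show ?thesis using Cl_disj \<open>fst p \<in> SC\<close> \<open>snd p' \<in> LC\<close> by blast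
qed

lemma avg_expand: "avg_deg E A (fst ` M) = (\<Sum>p\<in>M. density E A (fst p) * card (fst p))"
proof -
  have finA: "finite A" using Cl_fin Acl by blast
  have Apos: "card A > 0" using Cl_cardpos Acl by blast
  have finC: "p \<in> M \<Longrightarrow> finite (fst p)" for p using M_facts Cl_fin by blast
  have dec: "card {y \<in> \<Union>(fst ` M). E a y} = (\<Sum>p\<in>M. card {y\<in>fst p. E a y})" for a
  proof -
    have "{y \<in> \<Union>(fst ` M). E a y} = (\<Union>p\<in>M. {y\<in>fst p. E a y})" by auto
    moreover have "card (\<Union>p\<in>M. {y\<in>fst p. E a y}) = (\<Sum>p\<in>M. card {y\<in>fst p. E a y})"
    proof (rule card_UN_disjoint[OF M_finite])
      show "\<forall>i\<in>M. finite {y\<in>fst i. E a y}" using finC by simp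
      show "\<forall>i\<in>M. \<forall>j\<in>M. i \<noteq> j \<longrightarrow> {y\<in>fst i. E a y} \<inter> {y\<in>fst j. E a y} = {}"
      proof (intro ballI impI)
        fix i j assume "i \<in> M" "j \<in> M" "i \<noteq> j"
        then have "fst i \<inter> fst j = {}" by (rule M_disj_fst)
        then show "{y\<in>fst i. E a y} \<inter> {y\<in>fst j. E a y} = {}" by auto
      qed
    qed
    ultimately show ?thesis by simp
  qed
  have "(\<Sum>a\<in>A. card {y \<in> \<Union>(fst ` M). E a y}) = (\<Sum>a\<in>A. \<Sum>p\<in>M. card {y\<in>fst p. E a y})"
    using dec by simp
  also have "\<dots> = (\<Sum>p\<in>M. \<Sum>a\<in>A. card {y\<in>fst p. E a y})" by (rule sum.swap)
  also have "\<dots> = (\<Sum>p\<in>M. card (edges_between E A (fst p)))"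
  proof (rule sum.cong[OF refl])
    fix p assume p: "p \<in> M"
    show "(\<Sum>a\<in>A. card {y\<in>fst p. E a y}) = card (edges_between E A (fst p))"
      using card_edges_sum[OF finA finC[OF p]] by simp
  qed
  finally have eq: "(\<Sum>a\<in>A. card {y \<in> \<Union>(fst ` M). E a y}) = (\<Sum>p\<in>M. card (edges_between E A (fst p)))" .
  have "avg_deg E A (fst ` M) = real (\<Sum>p\<in>M. card (edges_between E A (fst p))) / card A"
    unfolding avg_deg_def of_nat_sum[symmetric] eq by simp
  also have "\<dots> = (\<Sum>p\<in>M. real (card (edges_between E A (fst p))) / card A)"
    by (simp add: sum_divide_distrib)
  also have "\<dots> = (\<Sum>p\<in>M. density E A (fst p) * card (fst p))"
  proof (rule sum.cong[OF refl])
    fix p assume p: "p \<in> M"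
    have "card (fst p) > 0" using M_facts[OF p] Cl_cardpos by blast
    then show "real (card (edges_between E A (fst p))) / card A = density E A (fst p) * card (fst p)"
      unfolding density_def using Apos by (simp add: field_simps)
  qed
  finally show ?thesis .
qed

lemma sum_fst_le: "(\<Sum>p\<in>M. real (card (fst p))) \<le> n"
proof -
  have finC: "p \<in> M \<Longrightarrow> finite (fst p)" for p using M_facts Cl_fin by blast
  have "card (\<Union>p\<in>M. fst p) = (\<Sum>p\<in>M. card (fst p))"
  proof (rule card_UN_disjoint[OF M_finite])
    show "\<forall>i\<in>M. finite (fst i)" using finC by simp
    show "\<forall>i\<in>M. \<forall>j\<in>M. i \<noteq> j \<longrightarrow> fst i \<inter> fst j = {}" using M_disj_fst by simp
  qed
  moreover have "(\<Union>p\<in>M. fst p) \<subseteq> V" using M_facts Cl_sub by blast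
  then have "card (\<Union>p\<in>M. fst p) \<le> n" using finV nV card_mono by blast
  ultimately show ?thesis by (metis of_nat_le_iff of_nat_sum)
qed

end

context ctx
begin

lemma sum_mx: "(\<Sum>(C, D) \<in> M. max (real (card (U \<inter> C))) ((1 - r) / r * real (card (U \<inter> D))))
   = (\<Sum>p\<in>M. mx p)"
  by (rule sum.cong[OF refl]) (simp add: mx_def split: prod.splits)

lemma card_T_z:
  assumes z: "z \<in> R"
  shows "real (card {p\<in>M. \<not> typical E \<epsilon> A (fst p) (\<psi> z)}) \<le> sqrt \<epsilon> * card Cl"
proof -
  have ut: "ultratypical E \<epsilon> Cl (\<psi> z)" and zA: "\<psi> z \<in> A" using psi_ut z by auto
  then obtain X where X: "X \<in> Cl" "\<psi> z \<in> X"
    "real (card {Y \<in> Cl. Y \<noteq> X \<and> \<not> typical E \<epsilon> X Y (\<psi> z)}) \<le> sqrt \<epsilon> * card Cl"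
    unfolding ultratypical_def by blast
  have "X = A" using Cl_eq[OF X(1) Acl X(2) zA] .
  let ?T = "{p\<in>M. \<not> typical E \<epsilon> A (fst p) (\<psi> z)}"
  have inj: "inj_on fst ?T"
  proof (rule inj_onI)
    fix p p' assume p: "p \<in> ?T" "p' \<in> ?T" "fst p = fst p'"
    show "p = p'"
    proof (rule ccontr)
      assume "p \<noteq> p'"
      then have "fst p \<noteq> fst p'" using M_inj p by blast
      then show False using p by simp
    qed
  qed
  have sub: "fst ` ?T \<subseteq> {Y \<in> Cl. Y \<noteq> A \<and> \<not> typical E \<epsilon> A Y (\<psi> z)}"
  proof
    fix Y assume "Y \<in> fst ` ?T"
    then obtain p where p: "p \<in> M" "Y = fst p" "\<not> typical E \<epsilon> A (fst p) (\<psi> z)" by auto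
    have "Y \<in> SC" using M_facts p by auto
    then have "Y \<noteq> A" using A_L LS_disj by auto
    then show "Y \<in> {Y \<in> Cl. Y \<noteq> A \<and> \<not> typical E \<epsilon> A Y (\<psi> z)}" using p \<open>Y \<in> SC\<close> by auto
  qed
  have "card ?T = card (fst ` ?T)" using card_image[OF inj] by simp
  also have "\<dots> \<le> card {Y \<in> Cl. Y \<noteq> A \<and> \<not> typical E \<epsilon> A Y (\<psi> z)}"
    by (rule card_mono) (use Cl_finite sub in auto)
  finally have "real (card ?T) \<le> real (card {Y \<in> Cl. Y \<noteq> A \<and> \<not> typical E \<epsilon> A Y (\<psi> z)})"
    by (simp only: of_nat_le_iff)
  also have "\<dots> \<le> sqrt \<epsilon> * card Cl" using X(3) unfolding \<open>X = A\<close> .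
  finally show ?thesis .
qed

lemma exists_good:
  assumes Z: "Z \<subseteq> R" "finite Z" "card Z \<le> 2"
    and Ibal: "\<forall>p\<in>M. card (I \<inter> fst p) \<le> card (I \<inter> snd p)"
    and Isum: "(\<Sum>p\<in>M. real (card (I \<inter> snd p))) \<le> card F2"
  shows "\<exists>p\<in>M. (\<forall>z\<in>Z. typical E \<epsilon> A (fst p) (\<psi> z))
     \<and> \<gamma> * card (fst p) \<le> (density E A (fst p) - \<epsilon>) * card (fst p) - card (U \<inter> fst p) - card (I \<inter> fst p)
     \<and> \<gamma> * card (snd p) \<le> real (card (snd p)) - card (U \<inter> snd p) - card (I \<inter> snd p)"
proof (rule ccontr)
  assume nx: "\<not> ?thesis"
  define f where "f p = density E A (fst p) * card (fst p)" for p :: "'a set \<times> 'a set"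
  define T where "T = {p\<in>M. \<exists>z\<in>Z. \<not> typical E \<epsilon> A (fst p) (\<psi> z)}"
  have finT: "finite T" using M_finite T_def by simp
  have TM: "T \<subseteq> M" using T_def by auto
  have cl0: "real (card Cl) > 0" using Cl_card_pos[OF Acl] by simp
  have cT: "real (card T) \<le> 2 * sqrt \<epsilon> * card Cl"
  proof -
    have "T = (\<Union>z\<in>Z. {p\<in>M. \<not> typical E \<epsilon> A (fst p) (\<psi> z)})" using T_def by auto
    then have "card T \<le> (\<Sum>z\<in>Z. card {p\<in>M. \<not> typical E \<epsilon> A (fst p) (\<psi> z)})"
      using card_UN_le[OF Z(2)] by simp
    then have "real (card T) \<le> (\<Sum>z\<in>Z. real (card {p\<in>M. \<not> typical E \<epsilon> A (fst p) (\<psi> z)}))"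
      by (simp only: of_nat_sum[symmetric] of_nat_le_iff)
    also have "\<dots> \<le> (\<Sum>z\<in>Z. sqrt \<epsilon> * card Cl)"
      by (rule sum_mono) (use card_T_z Z(1) in blast)
    also have "\<dots> = card Z * (sqrt \<epsilon> * card Cl)" by simp
    also have "\<dots> \<le> 2 * (sqrt \<epsilon> * card Cl)"
      by (rule mult_right_mono) (use Z(3) ep0 in auto)
    finally show ?thesis by simp
  qed
  have sT: "(\<Sum>p\<in>T. f p) \<le> 2 * sqrt \<epsilon> * q * n"
  proof -
    have "(\<Sum>p\<in>T. f p) \<le> (\<Sum>p\<in>T. q * n / card Cl)"
    proof (rule sum_mono)
      fix p assume "p \<in> T"
      then have p: "p \<in> M" using TM by auto
      have C: "fst p \<in> Cl" using M_facts[OF p] by auto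
      have "f p \<le> card (fst p)" unfolding f_def
        using dens_le1[OF Cl_fin[OF Acl] Cl_fin[OF C]] dens_nonneg
        by (simp add: mult_left_le_one_le)
      also have "\<dots> \<le> q * n / card Cl" using upper_size[OF C] cl0
        by (simp add: le_divide_eq mult.commute)
      finally show "f p \<le> q * n / card Cl" .
    qed
    also have "\<dots> = card T * (q * n / card Cl)" by simp
    also have "\<dots> \<le> (2 * sqrt \<epsilon> * card Cl) * (q * n / card Cl)"
      by (rule mult_right_mono[OF cT]) (use q1 in simp)
    also have "\<dots> = 2 * sqrt \<epsilon> * q * n" using cl0 by (simp add: field_simps)
    finally show ?thesis .
  qed
  have fail: "f p \<le> mx p + q * card (I \<inter> snd p) + (\<gamma> + \<epsilon>) * card (fst p)" if p: "p \<in> M - T" for p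
  proof -
    have pM: "p \<in> M" using p by auto
    have tyz: "\<forall>z\<in>Z. typical E \<epsilon> A (fst p) (\<psi> z)" using p T_def by auto
    have C: "fst p \<in> SC" and D: "snd p \<in> LC" using M_facts[OF pM] by auto
    have CD: "real (card (fst p)) = q * card (snd p)" using SqL[OF D C] .
    have IC: "real (card (I \<inter> fst p)) \<le> q * card (I \<inter> snd p)"
    proof -
      have "real (card (I \<inter> fst p)) \<le> card (I \<inter> snd p)" using Ibal pM by simp
      also have "\<dots> \<le> q * card (I \<inter> snd p)" using q1 by (simp add: mult_le_cancel_right1)
      finally show ?thesis .
    qed
    have mx1: "real (card (U \<inter> fst p)) \<le> mx p" unfolding mx_def by simp
    have mx2: "q * card (U \<inter> snd p) \<le> mx p" unfolding mx_def q_def by simp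
    have g0: "\<gamma> \<ge> 0" "\<epsilon> \<ge> 0" unfolding \<gamma>_def using r0 eta0 ep0 by auto
    have "\<not> (\<gamma> * card (fst p) \<le> (density E A (fst p) - \<epsilon>) * card (fst p) - card (U \<inter> fst p) - card (I \<inter> fst p))
     \<or> \<not> (\<gamma> * card (snd p) \<le> real (card (snd p)) - card (U \<inter> snd p) - card (I \<inter> snd p))"
      using nx tyz pM by blast
    then show ?thesis
    proof
      assume a: "\<not> \<gamma> * card (fst p) \<le> (density E A (fst p) - \<epsilon>) * card (fst p) - card (U \<inter> fst p) - card (I \<inter> fst p)"
      then have "f p < card (U \<inter> fst p) + card (I \<inter> fst p) + (\<gamma> + \<epsilon>) * card (fst p)"
        unfolding f_def by (simp add: algebra_simps)
      then show ?thesis using mx1 IC by linarith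
    next
      assume b: "\<not> \<gamma> * card (snd p) \<le> real (card (snd p)) - card (U \<inter> snd p) - card (I \<inter> snd p)"
      have "f p \<le> card (fst p)" unfolding f_def
        using dens_le1[OF Cl_fin[OF Acl] Cl_fin, of "fst p"] C dens_nonneg
        by (simp add: mult_left_le_one_le)
      also have "\<dots> = q * card (snd p)" using CD .
      also have "\<dots> \<le> q * (card (U \<inter> snd p) + card (I \<inter> snd p) + \<gamma> * card (snd p))"
        using b q1 by (intro mult_left_mono) auto
      also have "\<dots> = q * card (U \<inter> snd p) + q * card (I \<inter> snd p) + \<gamma> * (q * card (snd p))"
        by (simp add: algebra_simps)
      also have "\<dots> = q * card (U \<inter> snd p) + q * card (I \<inter> snd p) + \<gamma> * card (fst p)"
        using CD by simp
      finally have fin: "f p \<le> q * card (U \<inter> snd p) + q * card (I \<inter> snd p) + \<gamma> * card (fst p)" .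
      have "(\<gamma> + \<epsilon>) * card (fst p) = \<gamma> * card (fst p) + \<epsilon> * card (fst p)" by (simp add: distrib_right)
      moreover have "\<epsilon> * card (fst p) \<ge> 0" using g0 by simp
      ultimately show ?thesis using fin mx2 by linarith
    qed
  qed
  have nonneg: "0 \<le> mx p + q * card (I \<inter> snd p) + (\<gamma> + \<epsilon>) * card (fst p)" for p
  proof -
    have "mx p \<ge> 0" unfolding mx_def by simp
    moreover have "\<gamma> \<ge> 0" unfolding \<gamma>_def using r0 eta0 by auto
    ultimately show ?thesis using q1 ep0 by simp
  qed
  have s5: "(\<Sum>p\<in>M - T. f p) \<le> (\<Sum>p\<in>M. mx p) + q * card F2 + (\<gamma> + \<epsilon>) * n"
  proof -
    have "(\<Sum>p\<in>M - T. f p) \<le> (\<Sum>p\<in>M - T. mx p + q * card (I \<inter> snd p) + (\<gamma> + \<epsilon>) * card (fst p))"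
      by (rule sum_mono) (rule fail)
    also have "\<dots> \<le> (\<Sum>p\<in>M. mx p + q * card (I \<inter> snd p) + (\<gamma> + \<epsilon>) * card (fst p))"
      by (rule sum_mono2[OF M_finite]) (use nonneg in auto)
    also have "\<dots> = (\<Sum>p\<in>M. mx p) + q * (\<Sum>p\<in>M. real (card (I \<inter> snd p))) + (\<gamma> + \<epsilon>) * (\<Sum>p\<in>M. real (card (fst p)))"
      by (simp add: sum.distrib sum_distrib_left)
    also have "\<dots> \<le> (\<Sum>p\<in>M. mx p) + q * card F2 + (\<gamma> + \<epsilon>) * n"
    proof -
      have "q * (\<Sum>p\<in>M. real (card (I \<inter> snd p))) \<le> q * card F2" using Isum q1 by simp
      moreover have "(\<gamma> + \<epsilon>) * (\<Sum>p\<in>M. real (card (fst p))) \<le> (\<gamma> + \<epsilon>) * n"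
        using sum_fst_le ep0 r0 eta0 unfolding \<gamma>_def by (intro mult_left_mono) auto
      ultimately show ?thesis by simp
    qed
    finally show ?thesis .
  qed
  have s6: "(\<Sum>p\<in>M. f p) = (\<Sum>p\<in>T. f p) + (\<Sum>p\<in>M - T. f p)"
    using sum.subset_diff[OF TM M_finite, of f] by (simp add: add.commute)
  have "avg_deg E A (fst ` M) = (\<Sum>p\<in>M. f p)" using avg_expand unfolding f_def by simp
  moreover have deg': "avg_deg E A (fst ` M) \<ge> q * real (card F2) + (\<Sum>p\<in>M. mx p) + \<eta> * real n"
    using deg unfolding sum_mx q_def .
  ultimately have main: "\<eta> * n \<le> 2 * sqrt \<epsilon> * q * n + (\<gamma> + \<epsilon>) * n"
    using s5 s6 sT by linarith
  have "sqrt \<epsilon> * q \<le> (r * \<eta> / 8) * q" using epA q1 by (intro mult_right_mono) auto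
  also have "\<dots> = (r * q) * \<eta> / 8" by simp
  also have "\<dots> \<le> \<eta> / 8" using rq eta0 r0 by simp
  finally have a1: "sqrt \<epsilon> * q \<le> \<eta> / 8" .
  have a2: "\<gamma> \<le> \<eta> / 8" unfolding \<gamma>_def using r2 eta0 by (simp add: field_simps)
  have "2 * sqrt \<epsilon> * q + (\<gamma> + \<epsilon>) \<le> \<eta> / 2" using a1 a2 epE by linarith
  then have "(2 * sqrt \<epsilon> * q + (\<gamma> + \<epsilon>)) * n \<le> \<eta> / 2 * n"
    by (rule mult_right_mono) simp
  then have h: "2 * sqrt \<epsilon> * q * n + (\<gamma> + \<epsilon>) * n \<le> (\<eta> * n) / 2"
    by (simp add: algebra_simps)
  have "\<eta> * n > 0" using npos eta0 by simp
  then show False using main h by linarith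
qed

end

lemma card_diff_real: "finite A \<Longrightarrow> real (card A) - real (card (A \<inter> B)) \<le> real (card (A - B))"
proof -
  assume "finite A"
  then have "card A = card (A - B) + card (A \<inter> B)" by (metis card_Int_Diff add.commute)
  then show ?thesis by simp
qed

context ctx
begin

definition "UT x \<longleftrightarrow> ultratypical E \<epsilon> Cl x"

lemma K_small:
  assumes K: "K \<in> components EF (VF - R)" and X: "X \<in> Cl"
  shows "real (card K) \<le> min d 1 * r * \<eta> / 32 * card X"
proof -
  have k: "real (card K) \<le> \<beta> * n" using AF_comp[OF K] by blast
  have "r * (\<beta> * n) = \<beta> * (r * n)" by simp
  also have "\<dots> \<le> \<beta> * ((real Nmax + 1) * card X)"
    using lower_size[OF X] beta0 by (intro mult_left_mono) auto
  also have "\<dots> = (\<beta> * (real Nmax + 1)) * card X" by simp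
  also have "\<dots> \<le> (min d 1 * r^2 * \<eta> / 32) * card X"
    using betaB by (intro mult_right_mono) auto
  also have "\<dots> = r * (min d 1 * r * \<eta> / 32 * card X)" by (simp add: power2_eq_square)
  finally have "\<beta> * n \<le> min d 1 * r * \<eta> / 32 * card X" using r0 by simp
  then show ?thesis using k by simp
qed

lemma num1: "min d 1 * r * \<eta> / 32 \<le> (d - \<epsilon>) * (r * \<eta> / 8) - 3 * \<epsilon>"
proof -
  have rp: "r * \<eta> / 8 > 0" using r0 eta0 by simp
  have "(d / 2) * (r * \<eta> / 8) \<le> (d - \<epsilon>) * (r * \<eta> / 8)"
    using epD rp by (intro mult_right_mono) auto
  moreover have "3 * \<epsilon> \<le> d * r * \<eta> / 32" using epC by simp
  moreover have "min d 1 * r * \<eta> \<le> d * r * \<eta>" using r0 eta0 by (simp add: mult_right_mono)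
  ultimately show ?thesis by (simp add: field_simps)
qed


lemma card_lb:
  assumes "finite T0" "finite B" "x \<le> real (card T0)" "real (card B) \<le> y" "T0 - B \<subseteq> G" "finite G"
  shows "x - y \<le> real (card G)"
proof -
  have "real (card T0) - card (T0 \<inter> B) \<le> card (T0 - B)" by (rule card_diff_real[OF assms(1)])
  moreover have "card (T0 \<inter> B) \<le> card B" by (rule card_mono) (use assms(2) in auto)
  moreover have "card (T0 - B) \<le> card G" by (rule card_mono[OF assms(6,5)])
  ultimately show ?thesis using assms(3,4) by linarith
qed

lemma card_avail:
  assumes "finite X'" "X' \<subseteq> X" "finite X"
  shows "real (card X') - card (U \<inter> X) - card (I \<inter> X) \<le> card (X' - (U \<union> I))"
proof -
  have "X' \<inter> (U \<union> I) \<subseteq> (U \<inter> X) \<union> (I \<inter> X)" using assms(2) by auto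
  moreover have "finite ((U \<inter> X) \<union> (I \<inter> X))"
  proof -
    have "(U \<inter> X) \<union> (I \<inter> X) \<subseteq> X" by auto
    then show ?thesis using assms(3) finite_subset by blast
  qed
  ultimately have "card (X' \<inter> (U \<union> I)) \<le> card ((U \<inter> X) \<union> (I \<inter> X))" by (rule card_mono[rotated])
  also have "\<dots> \<le> card (U \<inter> X) + card (I \<inter> X)" by (rule card_Un_le)
  finally have "real (card (X' \<inter> (U \<union> I))) \<le> card (U \<inter> X) + card (I \<inter> X)" by linarith
  then show ?thesis using card_diff_real[OF assms(1), of "U \<union> I"] by linarith
qed

lemma embed_K:
  assumes K: "K \<in> components EF (VF - R)"
    and Zd: "Z = {x\<in>R. \<exists>y\<in>K. EF x y}"
    and p: "p \<in> M"
    and tz: "\<forall>z\<in>Z. typical E \<epsilon> A (fst p) (\<psi> z)"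
    and g1: "\<gamma> * card (fst p) \<le> (density E A (fst p) - \<epsilon>) * card (fst p) - card (U \<inter> fst p) - card (I \<inter> fst p)"
    and g2: "\<gamma> * card (snd p) \<le> real (card (snd p)) - card (U \<inter> snd p) - card (I \<inter> snd p)"
  shows "\<exists>\<phi>K. inj_on \<phi>K K \<and> (\<forall>w\<in>K. \<phi>K w \<notin> U \<union> I) \<and> (\<forall>w\<in>K \<inter> F1. \<phi>K w \<in> fst p)
     \<and> (\<forall>w\<in>K \<inter> F2. \<phi>K w \<in> snd p \<and> UT (\<phi>K w))
     \<and> (\<forall>x\<in>K. \<forall>y\<in>K. EF x y \<longrightarrow> E (\<phi>K x) (\<phi>K y))
     \<and> (\<forall>z\<in>Z. \<forall>y\<in>K. EF z y \<longrightarrow> E (\<psi> z) (\<phi>K y))"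
proof -
  define C where "C = fst p"
  define D where "D = snd p"
  have CS: "C \<in> SC" and DL: "D \<in> LC" using M_facts[OF p] C_def D_def by auto
  have CC: "C \<in> Cl" and DC: "D \<in> Cl" using CS DL by auto
  have finC: "finite C" and finD: "finite D" using Cl_fin CC DC by auto
  have Cp: "card C > 0" and Dp: "card D > 0" using Cl_cardpos CC DC by auto
  have regDC: "regular_pair E \<epsilon> D C" and regCD: "regular_pair E \<epsilon> C D"
    using M_reg[OF p] C_def D_def by auto
  have dDC: "d \<le> density E D C" and dCD: "d \<le> density E C D" using M_dens[OF p] C_def D_def by auto
  define \<delta> where "\<delta> = d - \<epsilon>"
  have \<delta>0: "\<delta> \<ge> 0" unfolding \<delta>_def using epD d0 by simp
  define \<gamma>' where "\<gamma>' = r * \<eta> / 8"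
  have g'0: "\<gamma>' > 0" unfolding \<gamma>'_def using r0 eta0 by simp
  have gg': "\<gamma>' \<le> \<gamma>" unfolding \<gamma>'_def \<gamma>_def using r0 eta0 by simp
  have epg': "\<epsilon> \<le> \<gamma>'" unfolding \<gamma>'_def using epB .
  define C' where "C' = C - (U \<union> I)"
  define D' where "D' = {x \<in> D - (U \<union> I). UT x}"
  define N where "N z = {x\<in>C'. E (\<psi> z) x}" for z
  have C'C: "C' \<subseteq> C" and D'D: "D' \<subseteq> D" and NC': "\<And>z. N z \<subseteq> C'"
    unfolding C'_def D'_def N_def by auto
  have dens1: "density E A C \<le> 1" using dens_le1[OF Cl_fin[OF Acl] finC] .
  have sC': "\<gamma> * card C \<le> card C'"
  proof -
    have "density E A C - \<epsilon> \<le> 1" using dens1 ep0 by linarith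
    then have "(density E A C - \<epsilon>) * card C \<le> 1 * real (card C)" by (intro mult_right_mono) auto
    then show ?thesis using g1 card_avail[OF finC subset_refl finC, of I] unfolding C'_def C_def by linarith
  qed
  have sN: "\<gamma> * card C \<le> card (N z)" if z: "z \<in> Z" for z
  proof -
    have t: "(density E A C - \<epsilon>) * card C \<le> card {x\<in>C. E (\<psi> z) x}"
      using tz z unfolding typical_def C_def by simp
    have "N z = {x\<in>C. E (\<psi> z) x} - (U \<union> I)" unfolding N_def C'_def by auto
    then have "real (card (N z)) = real (card ({x\<in>C. E (\<psi> z) x} - (U \<union> I)))" by simp
    moreover have "real (card {x\<in>C. E (\<psi> z) x}) - card (U \<inter> C) - card (I \<inter> C)
        \<le> card ({x\<in>C. E (\<psi> z) x} - (U \<union> I))"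
      by (rule card_avail) (use finC in auto)
    ultimately show ?thesis using g1 t unfolding C_def by linarith
  qed
  have sD': "\<gamma>' * card D \<le> card D'"
  proof -
    have a1: "real (card D) - card (U \<inter> D) - card (I \<inter> D) \<le> card (D - (U \<union> I))"
      by (rule card_avail[OF finD subset_refl finD])
    have "D' = (D - (U \<union> I)) - {x\<in>D. \<not> UT x}" unfolding D'_def by auto
    then have "real (card D') = real (card ((D - (U \<union> I)) - {x\<in>D. \<not> UT x}))" by simp
    moreover have "card ((D - (U \<union> I)) \<inter> {x\<in>D. \<not> UT x}) \<le> card {x\<in>D. \<not> UT x}"
      by (rule card_mono) (use finD in auto)
    moreover have "real (card (D - (U \<union> I))) - card ((D - (U \<union> I)) \<inter> {x\<in>D. \<not> UT x})
        \<le> card ((D - (U \<union> I)) - {x\<in>D. \<not> UT x})"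
      by (rule card_diff_real) (use finD in auto)
    ultimately have a2: "real (card (D - (U \<union> I))) - card {x\<in>D. \<not> UT x} \<le> card D'"
      by linarith
    have a3: "real (card {x\<in>D. \<not> UT x}) \<le> sqrt \<epsilon> * card D"
      using UT_few[OF DL] unfolding UT_def .
    have a4: "sqrt \<epsilon> * card D \<le> (r * \<eta> / 8) * card D" using epA by (intro mult_right_mono) auto
    have "\<gamma>' * card D = \<gamma> * card D - (r * \<eta> / 8) * card D" unfolding \<gamma>'_def \<gamma>_def by (simp add: field_simps)
    then show ?thesis using a1 a2 a3 a4 g2 unfolding D_def by linarith
  qed
  have badD: "real (card {v\<in>D. real (card {u\<in>Y'. E v u}) < \<delta> * card Y'}) < \<epsilon> * card D"
    if Y': "Y' \<subseteq> C" "\<gamma>' * card C \<le> card Y'" for Y'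
  proof -
    have "\<epsilon> * card C \<le> \<gamma>' * card C" using epg' by (intro mult_right_mono) auto
    then have e: "\<epsilon> * card C \<le> card Y'" using Y' by linarith
    have "0 < \<gamma>' * card C" using g'0 Cp by simp
    then have pos: "card Y' > 0" using Y' by linarith
    show ?thesis unfolding \<delta>_def
      by (rule few_bad[OF symE regDC finD finC Cl_ne[OF DC] Y'(1) e pos dDC ep0])
  qed
  have badC: "real (card {v\<in>C. real (card {u\<in>D'. E v u}) < \<delta> * card D'}) < \<epsilon> * card C"
  proof -
    have "\<epsilon> * card D \<le> \<gamma>' * card D" using epg' by (intro mult_right_mono) auto
    then have e: "\<epsilon> * card D \<le> card D'" using sD' by linarith
    have "0 < \<gamma>' * card D" using g'0 Dp by simp
    then have pos: "card D' > 0" using sD' by linarith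
    show ?thesis unfolding \<delta>_def
      by (rule few_bad[OF symE regCD finC finD Cl_ne[OF CC] D'D e pos dCD ep0])
  qed
  have ZR: "Z \<subseteq> R" using Zd by auto
  have Zfin: "finite Z" by (rule finite_subset[OF _ finVF]) (use ZR RVF in auto)
  have cZ: "1 \<le> card Z" "card Z \<le> 2" using AF_comp[OF K] Zd by simp_all
  have KVF: "K \<subseteq> VF - R" using comp_sub[OF K] .
  have finK: "finite K" by (rule finite_subset[OF _ finVF]) (use KVF in auto)
  have KF: "K \<subseteq> F1 \<union> F2" using KVF F12 by auto
  have "Z \<noteq> {}" using cZ by auto
  then obtain z0 where z0: "z0 \<in> Z" by auto
  then obtain a where a: "a \<in> K" "EF z0 a" using Zd by auto
  have z0R: "z0 \<in> R" using z0 ZR by auto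
  have nb_F1: "y \<in> F1" if "z \<in> R" "EF z y" for z y
    using F12e[OF that(2)] that(1) RF2 F12(2) by auto
  have aF1: "a \<in> F1" using nb_F1[OF z0R a(2)] .
  define BC where "BC = {v\<in>C. real (card {u\<in>D'. E v u}) < \<delta> * card D'}"
  define BD where "BD Y' = {v\<in>D. real (card {u\<in>Y'. E v u}) < \<delta> * card Y'}" for Y'
  define Good where "Good w v \<longleftrightarrow> v \<notin> U \<union> I \<and> (if w \<in> F1 then v \<in> C \<and> \<delta> * card D' \<le> card {x\<in>D'. E v x}
       \<and> (\<forall>z\<in>Z. EF z w \<longrightarrow> E (\<psi> z) v)
     else v \<in> D' \<and> \<delta> * card C' \<le> card {x\<in>C'. E v x} \<and> (\<forall>z\<in>Z. \<delta> * card (N z) \<le> card {x\<in>N z. E v x}))"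
    for w v
  have cBC: "real (card BC) \<le> \<epsilon> * card C" using badC unfolding BC_def by simp
  have BCfin: "finite BC" unfolding BC_def using finC by simp
  have BDfin: "finite (BD Y')" for Y' unfolding BD_def using finD by simp
  have cBD: "real (card (BD Y')) \<le> \<epsilon> * card D" if "Y' \<subseteq> C" "\<gamma>' * card C \<le> card Y'" for Y'
    using badD[OF that] unfolding BD_def by simp
  have C'big: "\<gamma>' * card C \<le> card C'"
  proof -
    have "\<gamma>' * card C \<le> \<gamma> * card C" using gg' by (intro mult_right_mono) auto
    then show ?thesis using sC' by linarith
  qed
  have Nbig: "\<gamma>' * card C \<le> card (N z)" if "z \<in> Z" for z
  proof -
    have "\<gamma>' * card C \<le> \<gamma> * card C" using gg' by (intro mult_right_mono) auto
    then show ?thesis using sN[OF that] by linarith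
  qed
  have Kb: "real (card K) \<le> (\<delta> * \<gamma>' - 3 * \<epsilon>) * card W" if "W \<in> Cl" for W
  proof -
    have "real (card K) \<le> min d 1 * r * \<eta> / 32 * card W" using K_small[OF K that] .
    also have "\<dots> \<le> (\<delta> * \<gamma>' - 3 * \<epsilon>) * card W"
      using num1 unfolding \<delta>_def \<gamma>'_def by (intro mult_right_mono) auto
    finally show ?thesis .
  qed
  have goodfin: "finite {v. Good w v \<and> E u v}" for w u
  proof -
    have "{v. Good w v \<and> E u v} \<subseteq> C \<union> D" unfolding Good_def D'_def by auto
    then show ?thesis by (rule finite_subset) (use finC finD in auto)
  qed
  have finN: "finite (N z)" for z by (rule finite_subset[OF _ finC]) (use NC' C'C in auto)
  have finC': "finite C'" by (rule finite_subset[OF _ finC]) (use C'C in auto)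
  have finD': "finite D'" by (rule finite_subset[OF _ finD]) (use D'D in auto)
  have Ga: "\<exists>v0. Good a v0"
  proof -
    have "\<gamma> * card C - \<epsilon> * card C \<le> real (card (N z0 - BC))"
      by (rule card_lb[OF _ BCfin sN[OF z0] cBC]) (use finN in auto)
    moreover have "\<epsilon> * card C < \<gamma> * card C"
    proof -
      have "\<epsilon> < \<gamma>" using epg' g'0 unfolding \<gamma>'_def \<gamma>_def by simp
      then show ?thesis using Cp by simp
    qed
    ultimately have "real (card (N z0 - BC)) > 0" by linarith
    then have "N z0 - BC \<noteq> {}" by (metis card.empty of_nat_0 less_irrefl)
    then obtain v0 where v0: "v0 \<in> N z0" "v0 \<notin> BC" by auto
    have "Good a v0" unfolding Good_def
    proof -
      have "v0 \<in> C'" using v0 NC' by auto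
      then have "v0 \<notin> U \<union> I" "v0 \<in> C" unfolding C'_def by auto
      moreover have "\<delta> * card D' \<le> card {x\<in>D'. E v0 x}" using v0(2) \<open>v0 \<in> C\<close> unfolding BC_def by auto
      moreover have "\<forall>z\<in>Z. EF z a \<longrightarrow> E (\<psi> z) v0"
      proof (intro ballI impI)
        fix z assume "z \<in> Z" "EF z a"
        then have "z = z0" using R_two_nb[of z z0 a] ZR z0 a by auto
        then show "E (\<psi> z) v0" using v0 unfolding N_def by auto
      qed
      ultimately show "v0 \<notin> U \<union> I \<and> (if a \<in> F1 then v0 \<in> C \<and> \<delta> * card D' \<le> card {x\<in>D'. E v0 x}
         \<and> (\<forall>z\<in>Z. EF z a \<longrightarrow> E (\<psi> z) v0)
         else v0 \<in> D' \<and> \<delta> * card C' \<le> card {x\<in>C'. E v0 x} \<and> (\<forall>z\<in>Z. \<delta> * card (N z) \<le> card {x\<in>N z. E v0 x}))"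
        using aF1 by simp
    qed
    then show ?thesis by blast
  qed
  have dg: "\<delta> * \<gamma>' * card W \<le> \<delta> * card W'" if "\<gamma>' * card W \<le> card W'" for W W' :: "'a set"
    using mult_left_mono[OF that \<delta>0] by (simp add: mult.assoc)
  have ext: "\<forall>p' w u. p'\<in>K \<longrightarrow> w\<in>K \<longrightarrow> EF p' w \<longrightarrow> Good p' u \<longrightarrow> card K \<le> card {v. Good w v \<and> E u v}"
  proof (intro allI impI)
    fix p' w u assume pK: "p' \<in> K" and wK: "w \<in> K" and e: "EF p' w" and G: "Good p' u"
    let ?G = "{v. Good w v \<and> E u v}"
    have "real (card K) \<le> real (card ?G)"
    proof (cases "p' \<in> F1")
      case True
      then have wF2: "w \<notin> F1" using F12e[OF e] F12(2) by auto
      have u: "\<delta> * card D' \<le> card {x\<in>D'. E u x}" using G True unfolding Good_def by simp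
      define B where "B = BD C' \<union> (\<Union>z\<in>Z. BD (N z))"
      have Bfin: "finite B" unfolding B_def using BDfin Zfin by simp
      have cB: "real (card B) \<le> 3 * \<epsilon> * card D"
      proof -
        have "card B \<le> card (BD C') + card (\<Union>z\<in>Z. BD (N z))" unfolding B_def by (rule card_Un_le)
        also have "card (\<Union>z\<in>Z. BD (N z)) \<le> (\<Sum>z\<in>Z. card (BD (N z)))" by (rule card_UN_le[OF Zfin])
        finally have c1: "real (card B) \<le> real (card (BD C')) + (\<Sum>z\<in>Z. real (card (BD (N z))))"
          by (simp only: of_nat_add[symmetric] of_nat_sum[symmetric] of_nat_le_iff)
        have c2: "real (card (BD C')) \<le> \<epsilon> * card D" by (rule cBD[OF C'C C'big])
        have c3: "(\<Sum>z\<in>Z. real (card (BD (N z)))) \<le> (\<Sum>z\<in>Z. \<epsilon> * card D)"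
        proof (rule sum_mono)
          fix z assume z: "z \<in> Z"
          have "N z \<subseteq> C" using NC' C'C by auto
          then show "real (card (BD (N z))) \<le> \<epsilon> * card D" by (rule cBD[OF _ Nbig[OF z]])
        qed
        have c4: "(\<Sum>z\<in>Z. \<epsilon> * card D) \<le> 2 * (\<epsilon> * card D)"
        proof -
          have "(\<Sum>z\<in>Z. \<epsilon> * card D) = card Z * (\<epsilon> * card D)" by simp
          also have "\<dots> \<le> 2 * (\<epsilon> * card D)" using cZ(2) ep0 by (intro mult_right_mono) auto
          finally show ?thesis .
        qed
        show ?thesis using c1 c2 c3 c4 by linarith
      qed
      have d1: "\<delta> * \<gamma>' * card D \<le> card {x\<in>D'. E u x}" using dg[OF sD'] u by linarith
      have sub: "{x\<in>D'. E u x} - B \<subseteq> ?G"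
      proof
        fix x assume x: "x \<in> {x\<in>D'. E u x} - B"
        have xD: "x \<in> D" and xUI: "x \<notin> U \<union> I" using x D'_def by auto
        have "\<delta> * card C' \<le> card {y\<in>C'. E x y}" using x xD unfolding B_def BD_def by auto
        moreover have "\<forall>z\<in>Z. \<delta> * card (N z) \<le> card {y\<in>N z. E x y}" using x xD unfolding B_def BD_def by auto
        ultimately show "x \<in> ?G" unfolding Good_def using wF2 x xUI by simp
      qed
      have "\<delta> * \<gamma>' * card D - 3 * \<epsilon> * card D \<le> real (card ?G)"
        by (rule card_lb[OF _ Bfin d1 cB sub goodfin]) (use finD' in simp)
      moreover have "real (card K) \<le> \<delta> * \<gamma>' * card D - 3 * \<epsilon> * card D"
        using Kb[OF DC] by (simp add: algebra_simps)
      ultimately show ?thesis by linarith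
    next
      case False
      then have pF2: "p' \<in> F2" using KF pK by auto
      then have wF1: "w \<in> F1" using F12e[OF e] F12(2) by auto
      have uC': "\<delta> * card C' \<le> card {x\<in>C'. E u x}" and uN: "\<forall>z\<in>Z. \<delta> * card (N z) \<le> card {x\<in>N z. E u x}"
        using G False unfolding Good_def by auto
      have KC: "real (card K) \<le> \<delta> * \<gamma>' * card C - \<epsilon> * card C"
      proof -
        have "real (card K) \<le> \<delta> * \<gamma>' * card C - 3 * \<epsilon> * card C"
          using Kb[OF CC] by (simp add: algebra_simps)
        moreover have "0 \<le> \<epsilon> * card C" using ep0 by simp
        ultimately show ?thesis by linarith
      qed
      show ?thesis
      proof (cases "\<exists>z\<in>Z. EF z w")
        case True
        then obtain z where z: "z \<in> Z" "EF z w" by auto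
        have d1: "\<delta> * \<gamma>' * card C \<le> card {x\<in>N z. E u x}" using dg[OF Nbig[OF z(1)]] uN z(1) by fastforce
        have sub: "{x\<in>N z. E u x} - BC \<subseteq> ?G"
        proof
          fix x assume x: "x \<in> {x\<in>N z. E u x} - BC"
          have xC': "x \<in> C'" using x NC' by auto
          then have xC: "x \<in> C" and xUI: "x \<notin> U \<union> I" unfolding C'_def by auto
          have "\<delta> * card D' \<le> card {y\<in>D'. E x y}" using x xC unfolding BC_def by auto
          moreover have "\<forall>z'\<in>Z. EF z' w \<longrightarrow> E (\<psi> z') x"
          proof (intro ballI impI)
            fix z' assume "z' \<in> Z" "EF z' w"
            then have "z' = z" using R_two_nb[of z' z w] ZR z by auto
            then show "E (\<psi> z') x" using x unfolding N_def by auto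
          qed
          ultimately show "x \<in> ?G" unfolding Good_def using wF1 x xC xUI by simp
        qed
        have "\<delta> * \<gamma>' * card C - \<epsilon> * card C \<le> real (card ?G)"
          by (rule card_lb[OF _ BCfin d1 cBC sub goodfin]) (use finN in simp)
        then show ?thesis using KC by linarith
      next
        case False
        have d1: "\<delta> * \<gamma>' * card C \<le> card {x\<in>C'. E u x}" using dg[OF C'big] uC' by linarith
        have sub: "{x\<in>C'. E u x} - BC \<subseteq> ?G"
        proof
          fix x assume x: "x \<in> {x\<in>C'. E u x} - BC"
          then have xC: "x \<in> C" and xUI: "x \<notin> U \<union> I" unfolding C'_def by auto
          have "\<delta> * card D' \<le> card {y\<in>D'. E x y}" using x xC unfolding BC_def by auto
          then show "x \<in> ?G" unfolding Good_def using wF1 x xC xUI False by simp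
        qed
        have "\<delta> * \<gamma>' * card C - \<epsilon> * card C \<le> real (card ?G)"
          by (rule card_lb[OF _ BCfin d1 cBC sub goodfin]) (use finC' in simp)
        then show ?thesis using KC by linarith
      qed
    qed
    then show "card K \<le> card ?G" by simp
  qed
  obtain v0 where v0: "Good a v0" using Ga by blast
  obtain \<phi>K where \<phi>K: "inj_on \<phi>K K" "\<forall>w\<in>K. Good w (\<phi>K w)" "\<forall>x\<in>K. \<forall>y\<in>K. EF x y \<longrightarrow> E (\<phi>K x) (\<phi>K y)"
    using greedy_tree[OF finK a(1) comp_conn[OF symF K a(1)] acyc symF irrF symE v0 ext] by blast
  show ?thesis
  proof (rule exI[of _ \<phi>K], intro conjI)
    show "inj_on \<phi>K K" by (rule \<phi>K(1))
    show "\<forall>w\<in>K. \<phi>K w \<notin> U \<union> I" using \<phi>K(2) unfolding Good_def by blast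
    show "\<forall>w\<in>K \<inter> F1. \<phi>K w \<in> fst p" using \<phi>K(2) unfolding Good_def C_def by auto
    show "\<forall>w\<in>K \<inter> F2. \<phi>K w \<in> snd p \<and> UT (\<phi>K w)"
    proof
      fix w assume w: "w \<in> K \<inter> F2"
      then have "w \<notin> F1" using F12(2) by auto
      then have "\<phi>K w \<in> D'" using \<phi>K(2) w unfolding Good_def by auto
      then show "\<phi>K w \<in> snd p \<and> UT (\<phi>K w)" unfolding D'_def D_def by auto
    qed
    show "\<forall>x\<in>K. \<forall>y\<in>K. EF x y \<longrightarrow> E (\<phi>K x) (\<phi>K y)" by (rule \<phi>K(3))
    show "\<forall>z\<in>Z. \<forall>y\<in>K. EF z y \<longrightarrow> E (\<psi> z) (\<phi>K y)"
    proof (intro ballI impI)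
      fix z y assume z: "z \<in> Z" and y: "y \<in> K" and e: "EF z y"
      have "y \<in> F1" using nb_F1[of z y] z ZR e by auto
      then show "E (\<psi> z) (\<phi>K y)" using \<phi>K(2) y z e unfolding Good_def by auto
    qed
  qed
qed

end

context ctx
begin

definition Inv :: "'b set \<Rightarrow> ('b \<Rightarrow> 'a) \<Rightarrow> bool" where
  "Inv S \<phi> \<longleftrightarrow> R \<subseteq> S \<and> S \<subseteq> VF \<and> (\<forall>v\<in>R. \<phi> v = \<psi> v) \<and> inj_on \<phi> S \<and> \<phi> ` S \<subseteq> V
    \<and> (\<forall>u\<in>S. \<forall>v\<in>S. EF u v \<longrightarrow> E (\<phi> u) (\<phi> v))
    \<and> \<phi> ` (S - R) \<inter> U = {}
    \<and> \<phi> ` (F1 \<inter> S) \<subseteq> \<Union>(fst ` M)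
    \<and> \<phi> ` (F2 \<inter> S - R) \<subseteq> \<Union>(snd ` M)
    \<and> (\<forall>v\<in>F2 \<inter> S. UT (\<phi> v))
    \<and> (\<forall>p\<in>M. card (\<phi> ` S \<inter> fst p) \<le> card (\<phi> ` S \<inter> snd p))
    \<and> (\<forall>p\<in>M. (\<exists>v\<in>S - R. \<phi> v \<in> fst p \<union> snd p) \<longrightarrow>
         r * \<eta> * card (fst p) / 8 \<le> card (fst p - (U \<union> \<phi> ` S))
       \<and> r * \<eta> * card (snd p) / 8 \<le> card (snd p - (U \<union> \<phi> ` S)))"

lemma finF2: "finite F2" using F12(1) finVF by (metis finite_Un)

lemma Inv_sum:
  assumes "Inv S \<phi>"
  shows "(\<Sum>p\<in>M. real (card (\<phi> ` S \<inter> snd p))) \<le> card F2"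
proof -
  have inv: "S \<subseteq> VF" "\<phi> ` (F1 \<inter> S) \<subseteq> \<Union>(fst ` M)" using assms unfolding Inv_def by auto
  have finD: "p \<in> M \<Longrightarrow> finite (snd p)" for p using M_facts Cl_fin by blast
  have eq: "card (\<Union>p\<in>M. \<phi> ` S \<inter> snd p) = (\<Sum>p\<in>M. card (\<phi> ` S \<inter> snd p))"
  proof (rule card_UN_disjoint[OF M_finite])
    show "\<forall>i\<in>M. finite (\<phi> ` S \<inter> snd i)" using finD by simp
    show "\<forall>i\<in>M. \<forall>j\<in>M. i \<noteq> j \<longrightarrow> \<phi> ` S \<inter> snd i \<inter> (\<phi> ` S \<inter> snd j) = {}"
    proof (intro ballI impI)
      fix i j assume "i \<in> M" "j \<in> M" "i \<noteq> j"
      then have "snd i \<inter> snd j = {}" by (rule M_disj_snd)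
      then show "\<phi> ` S \<inter> snd i \<inter> (\<phi> ` S \<inter> snd j) = {}" by auto
    qed
  qed
  have "(\<Union>p\<in>M. \<phi> ` S \<inter> snd p) \<subseteq> \<phi> ` (F2 \<inter> S)"
  proof
    fix x assume "x \<in> (\<Union>p\<in>M. \<phi> ` S \<inter> snd p)"
    then obtain p v where p: "p \<in> M" "v \<in> S" "x = \<phi> v" "x \<in> snd p" by auto
    have "v \<in> F2"
    proof (rule ccontr)
      assume "v \<notin> F2"
      then have "v \<in> F1" using p(2) inv(1) F12(1) by auto
      then have "x \<in> \<Union>(fst ` M)" using inv(2) p by auto
      then obtain p' where "p' \<in> M" "x \<in> fst p'" by auto
      then show False using M_disj_fs[OF \<open>p' \<in> M\<close> p(1)] p(4) by auto
    qed
    then show "x \<in> \<phi> ` (F2 \<inter> S)" using p by auto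
  qed
  then have "card (\<Union>p\<in>M. \<phi> ` S \<inter> snd p) \<le> card (\<phi> ` (F2 \<inter> S))"
    by (rule card_mono[rotated]) (use finF2 in simp)
  also have "\<dots> \<le> card (F2 \<inter> S)" by (rule card_image_le) (use finF2 in simp)
  also have "\<dots> \<le> card F2" by (rule card_mono[OF finF2]) auto
  finally have "(\<Sum>p\<in>M. card (\<phi> ` S \<inter> snd p)) \<le> card F2" using eq by simp
  then show ?thesis by (simp only: of_nat_sum[symmetric] of_nat_le_iff)
qed

lemma Inv_base: "Inv R \<psi>"
  unfolding Inv_def
proof (intro conjI)
  show "R \<subseteq> R" by simp
  show "R \<subseteq> VF" by (rule RVF)
  show "\<forall>v\<in>R. \<psi> v = \<psi> v" by simp
  show "inj_on \<psi> R" by (rule psi_inj)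
  show "\<psi> ` R \<subseteq> V" using psi_ut Cl_sub[OF Acl] by auto
  show "\<forall>u\<in>R. \<forall>v\<in>R. EF u v \<longrightarrow> E (\<psi> u) (\<psi> v)"
  proof (intro ballI impI)
    fix u v assume "u \<in> R" "v \<in> R" "EF u v"
    then show "E (\<psi> u) (\<psi> v)" using F12e[of u v] RF2 F12(2) by auto
  qed
  show "\<psi> ` (R - R) \<inter> U = {}" by simp
  show "\<psi> ` (F1 \<inter> R) \<subseteq> \<Union>(fst ` M)" using RF2 F12(2) by auto
  show "\<psi> ` (F2 \<inter> R - R) \<subseteq> \<Union>(snd ` M)" by blast
  show "\<forall>v\<in>F2 \<inter> R. UT (\<psi> v)" using psi_ut unfolding UT_def by auto
  show "\<forall>p\<in>M. card (\<psi> ` R \<inter> fst p) \<le> card (\<psi> ` R \<inter> snd p)"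
  proof
    fix p assume p: "p \<in> M"
    have "fst p \<in> SC" using M_facts[OF p] by auto
    then have "A \<noteq> fst p" using A_L LS_disj by auto
    then have "A \<inter> fst p = {}" using Cl_disj Acl \<open>fst p \<in> SC\<close> by auto
    then have "\<psi> ` R \<inter> fst p = {}" using psi_ut by auto
    then show "card (\<psi> ` R \<inter> fst p) \<le> card (\<psi> ` R \<inter> snd p)" by simp
  qed
  show "\<forall>p\<in>M. (\<exists>v\<in>R - R. \<psi> v \<in> fst p \<union> snd p) \<longrightarrow>
         r * \<eta> * card (fst p) / 8 \<le> card (fst p - (U \<union> \<psi> ` R))
       \<and> r * \<eta> * card (snd p) / 8 \<le> card (snd p - (U \<union> \<psi> ` R))" by simp
qed

end

context ctx
begin

lemma InvD1: "Inv S \<phi> \<Longrightarrow> R \<subseteq> S"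
  unfolding Inv_def by (elim conjE) assumption
lemma InvD2: "Inv S \<phi> \<Longrightarrow> S \<subseteq> VF"
  unfolding Inv_def by (elim conjE) assumption
lemma InvD3: "Inv S \<phi> \<Longrightarrow> \<forall>v\<in>R. \<phi> v = \<psi> v"
  unfolding Inv_def by (elim conjE) assumption
lemma InvD4: "Inv S \<phi> \<Longrightarrow> inj_on \<phi> S"
  unfolding Inv_def by (elim conjE) assumption
lemma InvD5: "Inv S \<phi> \<Longrightarrow> \<phi> ` S \<subseteq> V"
  unfolding Inv_def by (elim conjE) assumption
lemma InvD6: "Inv S \<phi> \<Longrightarrow> \<forall>u\<in>S. \<forall>v\<in>S. EF u v \<longrightarrow> E (\<phi> u) (\<phi> v)"
  unfolding Inv_def by (elim conjE) assumption
lemma InvD7: "Inv S \<phi> \<Longrightarrow> \<phi> ` (S - R) \<inter> U = {}"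
  unfolding Inv_def by (elim conjE) assumption
lemma InvD8: "Inv S \<phi> \<Longrightarrow> \<phi> ` (F1 \<inter> S) \<subseteq> \<Union>(fst ` M)"
  unfolding Inv_def by (elim conjE) assumption
lemma InvD9: "Inv S \<phi> \<Longrightarrow> \<phi> ` (F2 \<inter> S - R) \<subseteq> \<Union>(snd ` M)"
  unfolding Inv_def by (elim conjE) assumption
lemma InvD10: "Inv S \<phi> \<Longrightarrow> \<forall>v\<in>F2 \<inter> S. UT (\<phi> v)"
  unfolding Inv_def by (elim conjE) assumption
lemma InvD11: "Inv S \<phi> \<Longrightarrow> \<forall>p\<in>M. card (\<phi> ` S \<inter> fst p) \<le> card (\<phi> ` S \<inter> snd p)"
  unfolding Inv_def by (elim conjE) assumption
lemma InvD12: "Inv S \<phi> \<Longrightarrow> \<forall>p\<in>M. (\<exists>v\<in>S - R. \<phi> v \<in> fst p \<union> snd p) \<longrightarrow>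
         r * \<eta> * card (fst p) / 8 \<le> card (fst p - (U \<union> \<phi> ` S))
       \<and> r * \<eta> * card (snd p) / 8 \<le> card (snd p - (U \<union> \<phi> ` S))"
  unfolding Inv_def by (elim conjE) assumption
lemmas InvD = InvD1 InvD2 InvD3 InvD4 InvD5 InvD6 InvD7 InvD8 InvD9 InvD10 InvD11 InvD12

lemma Inv_step:
  assumes inv: "Inv S \<phi>" and K: "K \<in> components EF (VF - R)" and KS: "K \<inter> S = {}"
    and nbr: "\<forall>u\<in>S. \<forall>v\<in>K. EF u v \<longrightarrow> u \<in> R"
  shows "\<exists>\<phi>'. Inv (S \<union> K) \<phi>'"
proof -
  note I1 = InvD[OF inv]
  define Z where "Z = {x\<in>R. \<exists>y\<in>K. EF x y}"
  define I where "I = \<phi> ` S"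
  have ZR: "Z \<subseteq> R" using Z_def by auto
  have Zfin: "finite Z" by (rule finite_subset[OF _ finVF]) (use ZR RVF in auto)
  have cZ: "card Z \<le> 2" using AF_comp[OF K] Z_def by simp
  have KVF: "K \<subseteq> VF - R" using comp_sub[OF K] .
  have finK: "finite K" by (rule finite_subset[OF _ finVF]) (use KVF in auto)
  obtain p where p: "p \<in> M" and tz: "\<forall>z\<in>Z. typical E \<epsilon> A (fst p) (\<psi> z)"
    and g1: "\<gamma> * card (fst p) \<le> (density E A (fst p) - \<epsilon>) * card (fst p) - card (U \<inter> fst p) - card (I \<inter> fst p)"
    and g2: "\<gamma> * card (snd p) \<le> real (card (snd p)) - card (U \<inter> snd p) - card (I \<inter> snd p)"
    using exists_good[OF ZR Zfin cZ, of I] I1(11) Inv_sum[OF inv] unfolding I_def by blast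
  obtain \<phi>K where \<phi>K: "inj_on \<phi>K K" "\<forall>w\<in>K. \<phi>K w \<notin> U \<union> I" "\<forall>w\<in>K \<inter> F1. \<phi>K w \<in> fst p"
     "\<forall>w\<in>K \<inter> F2. \<phi>K w \<in> snd p \<and> UT (\<phi>K w)"
     "\<forall>x\<in>K. \<forall>y\<in>K. EF x y \<longrightarrow> E (\<phi>K x) (\<phi>K y)"
     "\<forall>z\<in>Z. \<forall>y\<in>K. EF z y \<longrightarrow> E (\<psi> z) (\<phi>K y)"
    using embed_K[OF K Z_def p tz g1 g2] by blast
  define C where "C = fst p"
  define D where "D = snd p"
  have CS: "C \<in> SC" and DL: "D \<in> LC" using M_facts[OF p] C_def D_def by auto
  have finC: "finite C" and finD: "finite D" using Cl_fin CS DL by auto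
  have KF: "K \<subseteq> F1 \<union> F2" using KVF F12 by auto
  have imK: "\<phi>K ` K \<subseteq> C \<union> D"
  proof
    fix x assume "x \<in> \<phi>K ` K"
    then obtain w where w: "w \<in> K" "x = \<phi>K w" by auto
    then show "x \<in> C \<union> D" using KF \<phi>K(3,4) C_def D_def by blast
  qed
  define \<phi>' where "\<phi>' v = (if v \<in> K then \<phi>K v else \<phi> v)" for v
  have \<phi>'S: "\<And>v. v \<in> S \<Longrightarrow> \<phi>' v = \<phi> v" using KS \<phi>'_def by auto
  have \<phi>'K: "\<And>v. v \<in> K \<Longrightarrow> \<phi>' v = \<phi>K v" using \<phi>'_def by auto
  have imS: "\<phi>' ` S = \<phi> ` S" by (rule image_cong[OF refl]) (use \<phi>'S in simp)
  have imK': "\<phi>' ` K = \<phi>K ` K" by (rule image_cong[OF refl]) (use \<phi>'K in simp)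
  have img: "\<phi>' ` (S \<union> K) = I \<union> \<phi>K ` K"
    unfolding I_def image_Un imS imK' ..
  have disjIK: "I \<inter> \<phi>K ` K = {}" using \<phi>K(2) by auto
  have CD0: "C \<inter> D = {}" using M_disj_fs[OF p p] C_def D_def by simp
  have other: "(C \<union> D) \<inter> fst p' = {} \<and> (C \<union> D) \<inter> snd p' = {}" if p': "p' \<in> M" "p' \<noteq> p" for p'
  proof -
    have "C \<inter> fst p' = {}" using M_disj_fst[OF p p'(1)] p'(2) C_def by auto
    moreover have "D \<inter> fst p' = {}" using M_disj_fs[OF p'(1) p] D_def by auto
    moreover have "C \<inter> snd p' = {}" using M_disj_fs[OF p p'(1)] C_def by auto
    moreover have "D \<inter> snd p' = {}" using M_disj_snd[OF p p'(1)] p'(2) D_def by auto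
    ultimately show ?thesis by auto
  qed
  have KR: "K \<inter> R = {}" using KVF by auto
  have cK: "real (card K) \<le> r * \<eta> / 32 * card X" if "X \<in> Cl" for X
  proof -
    have "real (card K) \<le> min d 1 * r * \<eta> / 32 * card X" by (rule K_small[OF K that])
    also have "\<dots> \<le> r * \<eta> / 32 * card X"
      using r0 eta0 by (intro mult_right_mono) (auto simp: min_def)
    finally show ?thesis .
  qed
  have shrink: "real (card (X - (U \<union> I))) - card K \<le> card (X - (U \<union> (I \<union> \<phi>K ` K)))"
    if "finite X" for X
  proof -
    have "X - (U \<union> (I \<union> \<phi>K ` K)) = (X - (U \<union> I)) - \<phi>K ` K" by auto
    moreover have "real (card (X - (U \<union> I))) - card ((X - (U \<union> I)) \<inter> \<phi>K ` K) \<le> card ((X - (U \<union> I)) - \<phi>K ` K)"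
      by (rule card_diff_real) (use that in simp)
    moreover have "card ((X - (U \<union> I)) \<inter> \<phi>K ` K) \<le> card K"
    proof -
      have "card ((X - (U \<union> I)) \<inter> \<phi>K ` K) \<le> card (\<phi>K ` K)" by (rule card_mono) (use finK in auto)
      also have "\<dots> \<le> card K" by (rule card_image_le[OF finK])
      finally show ?thesis .
    qed
    ultimately show ?thesis by simp
  qed
  have Cleft: "r * \<eta> * card C / 8 \<le> card (C - (U \<union> (I \<union> \<phi>K ` K)))"
  proof -
    have "density E A C \<le> 1" using dens_le1[OF Cl_fin[OF Acl] finC] .
    then have "(density E A C - \<epsilon>) * card C \<le> 1 * real (card C)" using ep0 by (intro mult_right_mono) auto
    then have "\<gamma> * card C \<le> real (card C) - card (U \<inter> C) - card (I \<inter> C)" using g1 C_def by simp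
    moreover have "real (card C) - card (U \<inter> C) - card (I \<inter> C) \<le> card (C - (U \<union> I))"
      by (rule card_avail[OF finC subset_refl finC])
    moreover have "real (card K) \<le> r * \<eta> / 32 * card C" using cK CS by simp
    moreover note shrink[OF finC]
    moreover have "r * \<eta> * card C / 8 \<le> \<gamma> * card C - r * \<eta> / 32 * card C"
      unfolding \<gamma>_def using r0 eta0 by (simp add: field_simps)
    ultimately show ?thesis by linarith
  qed
  have Dleft: "r * \<eta> * card D / 8 \<le> card (D - (U \<union> (I \<union> \<phi>K ` K)))"
  proof -
    have "\<gamma> * card D \<le> real (card D) - card (U \<inter> D) - card (I \<inter> D)" using g2 D_def by simp
    moreover have "real (card D) - card (U \<inter> D) - card (I \<inter> D) \<le> card (D - (U \<union> I))"
      by (rule card_avail[OF finD subset_refl finD])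
    moreover have "real (card K) \<le> r * \<eta> / 32 * card D" using cK DL by simp
    moreover note shrink[OF finD]
    moreover have "r * \<eta> * card D / 8 \<le> \<gamma> * card D - r * \<eta> / 32 * card D"
      unfolding \<gamma>_def using r0 eta0 by (simp add: field_simps)
    ultimately show ?thesis by linarith
  qed
  have "Inv (S \<union> K) \<phi>'"
    unfolding Inv_def
  proof (intro conjI)
    show "R \<subseteq> S \<union> K" using I1(1) by auto
    show "S \<union> K \<subseteq> VF" using I1(2) KVF by auto
    show "\<forall>v\<in>R. \<phi>' v = \<psi> v" using I1(1,3) \<phi>'S by auto
    show "inj_on \<phi>' (S \<union> K)"
    proof -
      have "inj_on \<phi>' S" using I1(4) inj_on_cong[of S \<phi>' \<phi>] \<phi>'S by simp
      moreover have "inj_on \<phi>' K" using \<phi>K(1) inj_on_cong[of K \<phi>' \<phi>K] \<phi>'K by simp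
      moreover have "\<phi>' ` (S - K) \<inter> \<phi>' ` (K - S) = {}"
      proof -
        have "\<phi>' ` (S - K) \<subseteq> I" using imS I_def by auto
        moreover have "\<phi>' ` (K - S) \<subseteq> \<phi>K ` K" using imK' by auto
        ultimately show ?thesis using disjIK by auto
      qed
      ultimately show ?thesis by (simp add: inj_on_Un)
    qed
    show "\<phi>' ` (S \<union> K) \<subseteq> V"
    proof -
      have "C \<union> D \<subseteq> V" using Cl_sub CS DL by auto
      then show ?thesis unfolding img I_def using I1(5) imK by auto
    qed
    show "\<forall>u\<in>S \<union> K. \<forall>v\<in>S \<union> K. EF u v \<longrightarrow> E (\<phi>' u) (\<phi>' v)"
    proof (intro ballI impI)
      fix u v assume u: "u \<in> S \<union> K" and v: "v \<in> S \<union> K" and e: "EF u v"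
      show "E (\<phi>' u) (\<phi>' v)"
      proof (cases "u \<in> K")
        case uK: True
        show ?thesis
        proof (cases "v \<in> K")
          case True then show ?thesis using uK e \<phi>K(5) \<phi>'K by simp
        next
          case False
          then have vS: "v \<in> S" using v by auto
          then have vR: "v \<in> R" using nbr uK e symF by blast
          then have "v \<in> Z" using uK e symF Z_def by auto
          then have "E (\<psi> v) (\<phi>K u)" using \<phi>K(6) uK e symF by blast
          then show ?thesis using symE \<phi>'K[OF uK] \<phi>'S[OF vS] I1(3) vR by auto
        qed
      next
        case uK: False
        then have uS: "u \<in> S" using u by auto
        show ?thesis
        proof (cases "v \<in> K")
          case True
          then have uR: "u \<in> R" using nbr uS e by blast
          then have "u \<in> Z" using True e Z_def by auto
          then have "E (\<psi> u) (\<phi>K v)" using \<phi>K(6) True e by blast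
          then show ?thesis using \<phi>'K[OF True] \<phi>'S[OF uS] I1(3) uR by auto
        next
          case False
          then have "v \<in> S" using v by auto
          then show ?thesis using uS e I1(6) \<phi>'S by simp
        qed
      qed
    qed
    show "\<phi>' ` (S \<union> K - R) \<inter> U = {}"
    proof -
      have "\<phi>' ` (S \<union> K - R) \<subseteq> \<phi> ` (S - R) \<union> \<phi>K ` K" using \<phi>'S \<phi>'K by auto
      moreover have "(\<phi> ` (S - R) \<union> \<phi>K ` K) \<inter> U = {}" using I1(7) \<phi>K(2) by auto
      ultimately show ?thesis by blast
    qed
    show "\<phi>' ` (F1 \<inter> (S \<union> K)) \<subseteq> \<Union>(fst ` M)"
    proof
      fix x assume "x \<in> \<phi>' ` (F1 \<inter> (S \<union> K))"
      then obtain w where w: "w \<in> F1" "w \<in> S \<union> K" "x = \<phi>' w" by auto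
      show "x \<in> \<Union>(fst ` M)"
      proof (cases "w \<in> K")
        case True then show ?thesis using w \<phi>K(3) \<phi>'K p by auto
      next
        case False then show ?thesis using w I1(8) \<phi>'S by auto
      qed
    qed
    show "\<phi>' ` (F2 \<inter> (S \<union> K) - R) \<subseteq> \<Union>(snd ` M)"
    proof
      fix x assume "x \<in> \<phi>' ` (F2 \<inter> (S \<union> K) - R)"
      then obtain w where w: "w \<in> F2" "w \<in> S \<union> K" "w \<notin> R" "x = \<phi>' w" by auto
      show "x \<in> \<Union>(snd ` M)"
      proof (cases "w \<in> K")
        case True then show ?thesis using w \<phi>K(4) \<phi>'K p by auto
      next
        case False then show ?thesis using w I1(9) \<phi>'S by auto
      qed
    qed
    show "\<forall>v\<in>F2 \<inter> (S \<union> K). UT (\<phi>' v)"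
      using I1(10) \<phi>K(4) \<phi>'S \<phi>'K by auto
    show "\<forall>p'\<in>M. card (\<phi>' ` (S \<union> K) \<inter> fst p') \<le> card (\<phi>' ` (S \<union> K) \<inter> snd p')"
    proof
      fix p' assume p': "p' \<in> M"
      show "card (\<phi>' ` (S \<union> K) \<inter> fst p') \<le> card (\<phi>' ` (S \<union> K) \<inter> snd p')"
      proof (cases "p' = p")
        case True
        have fIC: "finite (I \<inter> C)" using finC by simp
        have s1: "(I \<union> \<phi>K ` K) \<inter> C \<subseteq> (I \<inter> C) \<union> \<phi>K ` (K \<inter> F1)"
        proof
          fix x assume x: "x \<in> (I \<union> \<phi>K ` K) \<inter> C"
          show "x \<in> (I \<inter> C) \<union> \<phi>K ` (K \<inter> F1)"
          proof (cases "x \<in> I")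
            case True then show ?thesis using x by auto
          next
            case False
            then obtain w where w: "w \<in> K" "x = \<phi>K w" using x by auto
            have "w \<notin> F2"
            proof
              assume "w \<in> F2"
              then have "x \<in> D" using \<phi>K(4) w D_def by auto
              then show False using x CD0 by auto
            qed
            then have "w \<in> F1" using KF w by auto
            then show ?thesis using w by auto
          qed
        qed
        have "card ((I \<union> \<phi>K ` K) \<inter> C) \<le> card ((I \<inter> C) \<union> \<phi>K ` (K \<inter> F1))"
          by (rule card_mono[OF _ s1]) (use finK fIC in simp)
        also have "\<dots> \<le> card (I \<inter> C) + card (\<phi>K ` (K \<inter> F1))" by (rule card_Un_le)
        also have "card (\<phi>K ` (K \<inter> F1)) \<le> card (K \<inter> F1)" by (rule card_image_le) (use finK in simp)
        finally have c1: "card ((I \<union> \<phi>K ` K) \<inter> C) \<le> card (I \<inter> C) + card (K \<inter> F1)" by simp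
        have s2: "(I \<inter> D) \<union> \<phi>K ` (K \<inter> F2) \<subseteq> (I \<union> \<phi>K ` K) \<inter> D" using \<phi>K(4) D_def by auto
        have fID: "finite (I \<inter> D)" using finD by simp
        have "card ((I \<inter> D) \<union> \<phi>K ` (K \<inter> F2)) = card (I \<inter> D) + card (\<phi>K ` (K \<inter> F2))"
          by (rule card_Un_disjoint) (use fID finK disjIK in auto)
        also have "card (\<phi>K ` (K \<inter> F2)) = card (K \<inter> F2)"
          by (rule card_image) (rule inj_on_subset[OF \<phi>K(1)], auto)
        finally have "card (I \<inter> D) + card (K \<inter> F2) \<le> card ((I \<union> \<phi>K ` K) \<inter> D)"
          using card_mono[OF _ s2] finD by (metis finite_Int)
        moreover have "card (F1 \<inter> K) \<le> card (F2 \<inter> K)" using bal K by blast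
        moreover have "card (I \<inter> C) \<le> card (I \<inter> D)" using I1(11) p C_def D_def I_def by blast
        ultimately show ?thesis using c1 True img C_def D_def by (simp add: Int_commute)
      next
        case False
        have "\<phi>K ` K \<inter> fst p' = {}" "\<phi>K ` K \<inter> snd p' = {}" using other[OF p' False] imK by auto
        then have "(I \<union> \<phi>K ` K) \<inter> fst p' = I \<inter> fst p'" "(I \<union> \<phi>K ` K) \<inter> snd p' = I \<inter> snd p'" by auto
        then show ?thesis using img I1(11) p' I_def by simp
      qed
    qed
    show "\<forall>p'\<in>M. (\<exists>v\<in>S \<union> K - R. \<phi>' v \<in> fst p' \<union> snd p') \<longrightarrow>
         r * \<eta> * card (fst p') / 8 \<le> card (fst p' - (U \<union> \<phi>' ` (S \<union> K)))
       \<and> r * \<eta> * card (snd p') / 8 \<le> card (snd p' - (U \<union> \<phi>' ` (S \<union> K)))"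
    proof (intro ballI impI)
      fix p' assume p': "p' \<in> M" and ex: "\<exists>v\<in>S \<union> K - R. \<phi>' v \<in> fst p' \<union> snd p'"
      show "r * \<eta> * card (fst p') / 8 \<le> card (fst p' - (U \<union> \<phi>' ` (S \<union> K)))
       \<and> r * \<eta> * card (snd p') / 8 \<le> card (snd p' - (U \<union> \<phi>' ` (S \<union> K)))"
      proof (cases "p' = p")
        case True then show ?thesis using Cleft Dleft img C_def D_def by simp
      next
        case False
        have o: "\<phi>K ` K \<inter> fst p' = {}" "\<phi>K ` K \<inter> snd p' = {}" using other[OF p' False] imK by auto
        obtain v where v: "v \<in> S \<union> K - R" "\<phi>' v \<in> fst p' \<union> snd p'" using ex by blast
        have "v \<notin> K"
        proof
          assume "v \<in> K"
          then have "\<phi>' v \<in> \<phi>K ` K" using \<phi>'K by auto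
          then show False using o v(2) by auto
        qed
        then have "v \<in> S - R" "\<phi> v \<in> fst p' \<union> snd p'" using v \<phi>'S by auto
        then have old: "r * \<eta> * card (fst p') / 8 \<le> card (fst p' - (U \<union> I))
          \<and> r * \<eta> * card (snd p') / 8 \<le> card (snd p' - (U \<union> I))" using I1(12) p' I_def by blast
        have "fst p' - (U \<union> (I \<union> \<phi>K ` K)) = fst p' - (U \<union> I)" "snd p' - (U \<union> (I \<union> \<phi>K ` K)) = snd p' - (U \<union> I)"
          using o by auto
        then show ?thesis using old img by simp
      qed
    qed
  qed
  then show ?thesis by blast
qed

end

context ctx
begin

lemma all_Inv: "\<exists>\<phi>. Inv VF \<phi>"
proof -
  let ?C = "components EF (VF - R)"
  have fin: "finite ?C" by (rule comp_finite) (use finVF in simp)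
  have "\<exists>\<phi>. Inv (R \<union> \<Union>?C) \<phi>"
    using fin subset_refl
  proof (induction rule: finite_subset_induct')
    case empty
    then show ?case using Inv_base by auto
  next
    case (insert K F)
    then obtain \<phi> where inv: "Inv (R \<union> \<Union>F) \<phi>" by blast
    have K: "K \<in> ?C" using insert by simp
    have KVF: "K \<subseteq> VF - R" using comp_sub[OF K] .
    have KS: "K \<inter> (R \<union> \<Union>F) = {}"
    proof -
      have "K \<inter> K' = {}" if "K' \<in> F" for K'
      proof (rule ccontr)
        assume "K \<inter> K' \<noteq> {}"
        then obtain v where "v \<in> K" "v \<in> K'" by auto
        then have "K = K'" using comp_disj[OF symF K, of K' v] that insert.hyps(3) by blast
        then show False using that insert.hyps(4) by simp
      qed
      then show ?thesis using KVF by auto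
    qed
    have nbr: "\<forall>u\<in>R \<union> \<Union>F. \<forall>v\<in>K. EF u v \<longrightarrow> u \<in> R"
    proof (intro ballI impI)
      fix u v assume u: "u \<in> R \<union> \<Union>F" and v: "v \<in> K" and e: "EF u v"
      show "u \<in> R"
      proof (rule ccontr)
        assume uR: "u \<notin> R"
        then obtain K' where K': "K' \<in> F" "u \<in> K'" using u by auto
        have "u \<in> VF" using EF_in[OF e] by simp
        then have "u \<in> K" using comp_closed[OF symF K v, of u] uR e symF by blast
        then have "K = K'" using comp_disj[OF symF K, of K' u] K' insert.hyps(3) by blast
        then show False using K' insert.hyps(4) by simp
      qed
    qed
    obtain \<phi>' where "Inv ((R \<union> \<Union>F) \<union> K) \<phi>'" using Inv_step[OF inv K KS nbr] by blast
    moreover have "(R \<union> \<Union>F) \<union> K = R \<union> \<Union>(insert K F)" by auto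
    ultimately show ?case by auto
  qed
  moreover have "R \<union> \<Union>?C = VF"
  proof
    show "R \<union> \<Union>?C \<subseteq> VF" using RVF comp_sub by blast
    show "VF \<subseteq> R \<union> \<Union>?C"
    proof
      fix v assume "v \<in> VF"
      then show "v \<in> R \<union> \<Union>?C" using comp_cover[of v "VF - R" EF] by blast
    qed
  qed
  ultimately show ?thesis by simp
qed

theorem main:
  "\<exists>\<phi>. (\<forall>v \<in> R. \<phi> v = \<psi> v)
                 \<and> embedding VF EF V E \<phi>
                 \<and> \<phi> ` (VF - R) \<inter> U = {}
                 \<and> \<phi> ` F1 \<subseteq> \<Union>(fst ` M)
                 \<and> \<phi> ` (F2 - R) \<subseteq> \<Union>(snd ` M)
                 \<and> (\<forall>v \<in> F2. ultratypical E \<epsilon> (LC \<union> SC) (\<phi> v))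
                 \<and> (\<forall>C \<in> LC \<union> SC. (\<exists>v \<in> VF - R. \<phi> v \<in> C) \<longrightarrow>
                      real (card (C - (U \<union> \<phi> ` VF))) \<ge> r * \<eta> * real (card C) / 8)"
proof -
  obtain \<phi> where inv: "Inv VF \<phi>" using all_Inv by blast
  note I = InvD[OF inv]
  have F1V: "F1 \<inter> VF = F1" and F2V: "F2 \<inter> VF = F2" using F12(1) by auto
  show ?thesis
  proof (rule exI[of _ \<phi>], intro conjI)
    show "\<forall>v\<in>R. \<phi> v = \<psi> v" by (rule I(3))
    show "embedding VF EF V E \<phi>" unfolding embedding_def
      using I(4,5,6) EF_in by blast
    show "\<phi> ` (VF - R) \<inter> U = {}" by (rule I(7))
    show "\<phi> ` F1 \<subseteq> \<Union>(fst ` M)" using I(8) F1V by simp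
    show "\<phi> ` (F2 - R) \<subseteq> \<Union>(snd ` M)" using I(9) F2V by simp
    show "\<forall>v\<in>F2. ultratypical E \<epsilon> (LC \<union> SC) (\<phi> v)" using I(10) F2V unfolding UT_def by simp
    show "\<forall>C\<in>LC \<union> SC. (\<exists>v\<in>VF - R. \<phi> v \<in> C) \<longrightarrow>
        r * \<eta> * real (card C) / 8 \<le> real (card (C - (U \<union> \<phi> ` VF)))"
    proof (intro ballI impI)
      fix C assume C: "C \<in> LC \<union> SC" and ex: "\<exists>v\<in>VF - R. \<phi> v \<in> C"
      then obtain v where v: "v \<in> VF - R" "\<phi> v \<in> C" by blast
      obtain p where p: "p \<in> M" "\<phi> v \<in> fst p \<union> snd p"
      proof (cases "v \<in> F1")
        case True
        then have "\<phi> v \<in> \<Union>(fst ` M)" using I(8) v by auto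
        then show ?thesis using that by auto
      next
        case False
        then have "v \<in> F2" using v F12(1) by auto
        then have "\<phi> v \<in> \<Union>(snd ` M)" using I(9) v by auto
        then show ?thesis using that by auto
      qed
      have b: "r * \<eta> * card (fst p) / 8 \<le> card (fst p - (U \<union> \<phi> ` VF))
          \<and> r * \<eta> * card (snd p) / 8 \<le> card (snd p - (U \<union> \<phi> ` VF))"
        using I(12) p v by blast
      have "C = fst p \<or> C = snd p"
      proof (cases "\<phi> v \<in> fst p")
        case True
        then show ?thesis using Cl_eq[OF C _ v(2) True] M_facts[OF p(1)] by auto
      next
        case False
        then have "\<phi> v \<in> snd p" using p by auto
        then show ?thesis using Cl_eq[OF C _ v(2)] M_facts[OF p(1)] by auto
      qed
      then show "r * \<eta> * real (card C) / 8 \<le> real (card (C - (U \<union> \<phi> ` VF)))" using b by auto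
    qed
  qed
qed

end

theorem proposition6p1:
  shows "\<forall>\<eta> d :: real. \<eta> > 0 \<longrightarrow> d > 0 \<longrightarrow> (\<forall>r \<in> \<rat>. 0 < r \<longrightarrow> r \<le> 1/2 \<longrightarrow>
    (\<exists>\<epsilon> > 0. \<forall>Nmax :: nat. \<exists>\<beta> > 0. \<forall>n :: nat.
      \<forall>(VF :: nat set) EF R F1 F2 (V :: nat set) E LC SC (k :: nat) \<eta>' U M A.
        anchored_forest VF EF R (\<beta> * real n)
        \<and> colour_classes VF EF F1 F2 \<and> R \<subseteq> F2
        \<and> (\<forall>K \<in> components EF (VF - R). card (F1 \<inter> K) \<le> card (F2 \<inter> K))
        \<and> skew_LKS r V E LC SC k \<eta>' \<epsilon> d \<and> card V = n \<and> card (LC \<union> SC) \<le> Nmax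
        \<and> U \<subseteq> V \<and> LS_matching E LC SC M \<and> A \<in> LC \<union> SC
        \<and> avg_deg E A (fst ` M) \<ge> (1 - r) / r * real (card F2)
             + (\<Sum>(C, D) \<in> M. max (real (card (U \<inter> C))) ((1 - r) / r * real (card (U \<inter> D))))
             + \<eta> * real n
        \<longrightarrow> (\<forall>\<psi>. inj_on \<psi> R \<and> \<psi> ` R \<subseteq> {x \<in> A. ultratypical E \<epsilon> (LC \<union> SC) x} \<longrightarrow>
             (\<exists>\<phi>. (\<forall>v \<in> R. \<phi> v = \<psi> v)
                 \<and> embedding VF EF V E \<phi>
                 \<and> \<phi> ` (VF - R) \<inter> U = {}
                 \<and> \<phi> ` F1 \<subseteq> \<Union>(fst ` M)
                 \<and> \<phi> ` (F2 - R) \<subseteq> \<Union>(snd ` M)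
                 \<and> (\<forall>v \<in> F2. ultratypical E \<epsilon> (LC \<union> SC) (\<phi> v))
                 \<and> (\<forall>C \<in> LC \<union> SC. (\<exists>v \<in> VF - R. \<phi> v \<in> C) \<longrightarrow>
                      real (card (C - (U \<union> \<phi> ` VF))) \<ge> r * \<eta> * real (card C) / 8)))))"
proof (intro allI impI ballI)
  fix \<eta> d r :: real
  assume eta0: "\<eta> > 0" and d0: "d > 0" and rQ: "r \<in> \<rat>" and r0: "0 < r" and r2: "r \<le> 1/2"
  define \<epsilon> where "\<epsilon> = min (min ((r*\<eta>/8)^2) (r*\<eta>/8)) (min (d*r*\<eta>/96) (min (d/2) (min (\<eta>/8) 1)))"
  have rh: "r * \<eta> / 8 > 0" using r0 eta0 by simp
  have ep0: "\<epsilon> > 0" unfolding \<epsilon>_def using r0 eta0 d0 by simp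
  have epA: "sqrt \<epsilon> \<le> r*\<eta>/8"
  proof -
    have "\<epsilon> \<le> (r*\<eta>/8)^2" unfolding \<epsilon>_def by simp
    then have "sqrt \<epsilon> \<le> sqrt ((r*\<eta>/8)^2)" by (rule real_sqrt_le_mono)
    then show ?thesis using rh by simp
  qed
  have epB: "\<epsilon> \<le> r*\<eta>/8" and epC: "\<epsilon> \<le> d*r*\<eta>/96" and epD: "\<epsilon> \<le> d/2" and epE: "\<epsilon> \<le> \<eta>/8"
    and epF: "\<epsilon> \<le> 1" unfolding \<epsilon>_def by simp_all
  show "\<exists>\<epsilon>>0. \<forall>Nmax :: nat. \<exists>\<beta> > 0. \<forall>n :: nat.
      \<forall>(VF :: nat set) EF R F1 F2 (V :: nat set) E LC SC (k :: nat) \<eta>' U M A.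
        anchored_forest VF EF R (\<beta> * real n)
        \<and> colour_classes VF EF F1 F2 \<and> R \<subseteq> F2
        \<and> (\<forall>K \<in> components EF (VF - R). card (F1 \<inter> K) \<le> card (F2 \<inter> K))
        \<and> skew_LKS r V E LC SC k \<eta>' \<epsilon> d \<and> card V = n \<and> card (LC \<union> SC) \<le> Nmax
        \<and> U \<subseteq> V \<and> LS_matching E LC SC M \<and> A \<in> LC \<union> SC
        \<and> avg_deg E A (fst ` M) \<ge> (1 - r) / r * real (card F2)
             + (\<Sum>(C, D) \<in> M. max (real (card (U \<inter> C))) ((1 - r) / r * real (card (U \<inter> D))))
             + \<eta> * real n
        \<longrightarrow> (\<forall>\<psi>. inj_on \<psi> R \<and> \<psi> ` R \<subseteq> {x \<in> A. ultratypical E \<epsilon> (LC \<union> SC) x} \<longrightarrow>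
             (\<exists>\<phi>. (\<forall>v \<in> R. \<phi> v = \<psi> v)
                 \<and> embedding VF EF V E \<phi>
                 \<and> \<phi> ` (VF - R) \<inter> U = {}
                 \<and> \<phi> ` F1 \<subseteq> \<Union>(fst ` M)
                 \<and> \<phi> ` (F2 - R) \<subseteq> \<Union>(snd ` M)
                 \<and> (\<forall>v \<in> F2. ultratypical E \<epsilon> (LC \<union> SC) (\<phi> v))
                 \<and> (\<forall>C \<in> LC \<union> SC. (\<exists>v \<in> VF - R. \<phi> v \<in> C) \<longrightarrow>
                      real (card (C - (U \<union> \<phi> ` VF))) \<ge> r * \<eta> * real (card C) / 8)))"
  proof (rule exI[of _ \<epsilon>], intro conjI allI)
    show "\<epsilon> > 0" by (rule ep0)
    fix Nmax :: nat
    define \<beta> where "\<beta> = min d 1 * r^2 * \<eta> / (32 * (real Nmax + 1))"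
    have beta0: "\<beta> > 0" unfolding \<beta>_def using d0 r0 eta0 by simp
    have betaB: "\<beta> * (real Nmax + 1) \<le> min d 1 * r^2 * \<eta> / 32"
    proof -
      have pos: "real Nmax + 1 > 0" by simp
      have "\<beta> * (real Nmax + 1) = min d 1 * r^2 * \<eta> / 32"
        unfolding \<beta>_def using pos by (simp add: field_simps)
      then show ?thesis by simp
    qed
    show "\<exists>\<beta> > 0. \<forall>n :: nat.
      \<forall>(VF :: nat set) EF R F1 F2 (V :: nat set) E LC SC (k :: nat) \<eta>' U M A.
        anchored_forest VF EF R (\<beta> * real n)
        \<and> colour_classes VF EF F1 F2 \<and> R \<subseteq> F2
        \<and> (\<forall>K \<in> components EF (VF - R). card (F1 \<inter> K) \<le> card (F2 \<inter> K))
        \<and> skew_LKS r V E LC SC k \<eta>' \<epsilon> d \<and> card V = n \<and> card (LC \<union> SC) \<le> Nmax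
        \<and> U \<subseteq> V \<and> LS_matching E LC SC M \<and> A \<in> LC \<union> SC
        \<and> avg_deg E A (fst ` M) \<ge> (1 - r) / r * real (card F2)
             + (\<Sum>(C, D) \<in> M. max (real (card (U \<inter> C))) ((1 - r) / r * real (card (U \<inter> D))))
             + \<eta> * real n
        \<longrightarrow> (\<forall>\<psi>. inj_on \<psi> R \<and> \<psi> ` R \<subseteq> {x \<in> A. ultratypical E \<epsilon> (LC \<union> SC) x} \<longrightarrow>
             (\<exists>\<phi>. (\<forall>v \<in> R. \<phi> v = \<psi> v)
                 \<and> embedding VF EF V E \<phi>
                 \<and> \<phi> ` (VF - R) \<inter> U = {}
                 \<and> \<phi> ` F1 \<subseteq> \<Union>(fst ` M)
                 \<and> \<phi> ` (F2 - R) \<subseteq> \<Union>(snd ` M)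
                 \<and> (\<forall>v \<in> F2. ultratypical E \<epsilon> (LC \<union> SC) (\<phi> v))
                 \<and> (\<forall>C \<in> LC \<union> SC. (\<exists>v \<in> VF - R. \<phi> v \<in> C) \<longrightarrow>
                      real (card (C - (U \<union> \<phi> ` VF))) \<ge> r * \<eta> * real (card C) / 8)))"
    proof (rule exI[of _ \<beta>], intro conjI allI impI)
      show "\<beta> > 0" by (rule beta0)
    next
      fix n :: nat and VF :: "nat set" and EF R F1 F2 and V :: "nat set" and E LC SC and k :: nat
        and \<eta>' U M A \<psi>
      assume H: "anchored_forest VF EF R (\<beta> * real n)
        \<and> colour_classes VF EF F1 F2 \<and> R \<subseteq> F2
        \<and> (\<forall>K \<in> components EF (VF - R). card (F1 \<inter> K) \<le> card (F2 \<inter> K))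
        \<and> skew_LKS r V E LC SC k \<eta>' \<epsilon> d \<and> card V = n \<and> card (LC \<union> SC) \<le> Nmax
        \<and> U \<subseteq> V \<and> LS_matching E LC SC M \<and> A \<in> LC \<union> SC
        \<and> avg_deg E A (fst ` M) \<ge> (1 - r) / r * real (card F2)
             + (\<Sum>(C, D) \<in> M. max (real (card (U \<inter> C))) ((1 - r) / r * real (card (U \<inter> D))))
             + \<eta> * real n"
        and P: "inj_on \<psi> R \<and> \<psi> ` R \<subseteq> {x \<in> A. ultratypical E \<epsilon> (LC \<union> SC) x}"
      interpret ctx r \<eta> d \<epsilon> \<beta> n Nmax k VF EF R F1 F2 V E LC SC \<eta>' U M A \<psi>
      proof (unfold_locales)
        show "0 < r" "r \<le> 1/2" "0 < \<eta>" "0 < d" "0 < \<epsilon>" "sqrt \<epsilon> \<le> r*\<eta>/8" "\<epsilon> \<le> r*\<eta>/8"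
          "\<epsilon> \<le> d*r*\<eta>/96" "\<epsilon> \<le> d/2" "\<epsilon> \<le> \<eta>/8" "\<epsilon> \<le> 1" "0 < \<beta>"
          "\<beta> * (real Nmax + 1) \<le> min d 1 * r^2 * \<eta> / 32"
          using r0 r2 eta0 d0 ep0 epA epB epC epD epE epF beta0 betaB by auto
        show "inj_on \<psi> R" "\<psi> ` R \<subseteq> {x \<in> A. ultratypical E \<epsilon> (LC \<union> SC) x}" using P by auto
      qed (use H in simp_all)
      show "\<exists>\<phi>. (\<forall>v \<in> R. \<phi> v = \<psi> v)
                 \<and> embedding VF EF V E \<phi>
                 \<and> \<phi> ` (VF - R) \<inter> U = {}
                 \<and> \<phi> ` F1 \<subseteq> \<Union>(fst ` M)
                 \<and> \<phi> ` (F2 - R) \<subseteq> \<Union>(snd ` M)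
                 \<and> (\<forall>v \<in> F2. ultratypical E \<epsilon> (LC \<union> SC) (\<phi> v))
                 \<and> (\<forall>C \<in> LC \<union> SC. (\<exists>v \<in> VF - R. \<phi> v \<in> C) \<longrightarrow>
                      real (card (C - (U \<union> \<phi> ` VF))) \<ge> r * \<eta> * real (card C) / 8)"
        by (rule main)
    qed
  qed
qed

end
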